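(* Consider problem (P) with $d_i=p$, $A_i=I_p$ and $\mathcal{X}_i=\mathbb{R}^{p}$ for all $i$, under Assumption 1, let $\mathcal{G}$ be a directed, strongly connected and weight-balanced graph, and suppose each $f_i$ is $\mu_i$-strongly convex and $l_i$-smooth. Let $\mu=\min_i\mu_i$, $l=\max_i l_i$, $\varphi>0$, and let $\alpha,\beta$ satisfy $$\alpha\ge\max\Big\{\tfrac12,\;\frac{(\varphi^2+3\varphi+3)+l^2+\frac32-\mu}{(\varphi+1)\mu}\Big\},\qquad \beta\ge\frac{2(\varphi+1)^2\alpha^2+1}{2\varphi\alpha\,\eta_2(\hat L)}.$$ Then for any initial point $(\mathbf{x}(0),\boldsymbol\lambda(0),\mathbf{z}(0))\in\mathbb{R}^{np}\times\mathbb{R}^{np}\times\mathbb{R}^{np}$ with $\sum_{i=1}^n z_i(0)=0$, the trajectory of IDEA converges exponentially to a point $(\mathbf{x}^*,\boldsymbol\lambda^*,\mathbf{z}^* )$, where $\mathbf{x}^*$ is the unique optimal solution of (P).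
   Context: Problem (P): for $i=1,\dots,n$ let $f_i:\mathbb{R}^{d_i}\to\mathbb{R}$, $\mathcal{X}_i\subseteq\mathbb{R}^{d_i}$, $A_i\in\mathbb{R}^{p\times d_i}$, $b\in\mathbb{R}^p$; $d=\sum_i d_i$, $\mathbf{x}=[x_1^\top,\dots,x_n^\top]^\top$, $f(\mathbf{x})=\sum_i f_i(x_i)$, $A=[A_1,\dots,A_n]$, $\mathcal{X}=\prod_i\mathcal{X}_i$; (P) is $\min f(\mathbf{x})$ s.t. $A\mathbf{x}=b$, $\mathbf{x}\in\mathcal{X}$, assumed to have at least one optimal solution. Assumption 1: each $\mathcal{X}_i$ is closed and convex, $f_i$ is convex on $\mathcal{X}_i$ and differentiable on an open set containing $\mathcal{X}_i$ with $\nabla f_i$ locally Lipschitz there, and Slater's condition holds. $l_i$-smooth means $\nabla f_i$ is $l_i$-Lipschitz. Graph: weighted digraph with adjacency $[a_{ij}]$ ($a_{ij}>0$ if agent $i$ receives from agent $j$, else $0$); Laplacian $L=\mathrm{diag}(\sum_j a_{ij})_i-[a_{ij}]$; weight-balanced: $\sum_j a_{ji}=\sum_j a_{ij}$ for all $i$; strongly connected: directed path between any pair. $\hat L=(L+L^\top)/2$, $\eta_2(\hat L)$ its second smallest eigenvalue. IDEA: choose $b_1,\dots,b_n$ with $\sum_i b_i=b$; $\mathbf{A}=\mathrm{diag}(A_1,\dots,A_n)$, $\mathbf{b}=[b_1^\top,\dots,b_n^\top]^\top$, $\mathbf{L}=L\otimes I_p$, $\nabla f(\mathbf{x})=[\nabla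 f_1(x_1)^\top,\dots,\nabla f_n(x_n)^\top]^\top$. IDEA is $\dot{\mathbf{x}}=-\alpha(\nabla f(\mathbf{x})+\mathbf{A}^\top\boldsymbol\lambda)-\mathbf{A}^\top(\mathbf{A}\mathbf{x}-\mathbf{b}-\mathbf{z})$, $\dot{\boldsymbol\lambda}=\mathbf{A}\mathbf{x}-\mathbf{b}-\mathbf{z}-\beta\mathbf{L}\boldsymbol\lambda$, $\dot{\mathbf{z}}=\alpha\beta\mathbf{L}\boldsymbol\lambda$, with $\mathbf{z}=[z_1^\top,\dots,z_n^\top]^\top$. Exponential convergence means the distance to the limit is bounded by $Ce^{-ct}$ for some $C,c>0$. *)

theory Defs
  imports "HOL-Analysis.Analysis"
begin

definition strongly_convex_on :: "real \<Rightarrow> ('a::real_normed_vector) set \<Rightarrow> ('a \<Rightarrow> real) \<Rightarrow> bool" where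
  "strongly_convex_on mu S f \<longleftrightarrow> convex S \<and>
     (\<forall>x\<in>S. \<forall>y\<in>S. \<forall>t::real. 0 \<le> t \<and> t \<le> 1 \<longrightarrow>
        f (t *\<^sub>R x + (1 - t) *\<^sub>R y) \<le> t * f x + (1 - t) * f y - mu / 2 * t * (1 - t) * (norm (x - y))\<^sup>2)"

text \<open>Graph Laplacian of the weighted digraph with adjacency weights a (a i j > 0 iff i receives from j).\<close>
definition laplacian :: "('n::finite \<Rightarrow> 'n \<Rightarrow> real) \<Rightarrow> real^'n^'n" where
  "laplacian a = (\<chi> i j. (if i = j then (\<Sum>k\<in>UNIV. a i k) else 0) - a i j)"

definition weight_balanced :: "('n::finite \<Rightarrow> 'n \<Rightarrow> real) \<Rightarrow> bool" where
  "weight_balanced a \<longleftrightarrow> (\<forall>i. (\<Sum>j\<in>UNIV. a j i) = (\<Sum>j\<in>UNIV. a i j))"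

definition strongly_connected :: "('n::finite \<Rightarrow> 'n \<Rightarrow> real) \<Rightarrow> bool" where
  "strongly_connected a \<longleftrightarrow> (\<forall>i j. (j, i) \<in> {(u, v). a v u > 0}\<^sup>*)"

definition sym_part :: "real^'n^'n \<Rightarrow> real^'n^'n" where
  "sym_part M = (1/2) *\<^sub>R (M + transpose M)"

text \<open>Multiplicity of c as an eigenvalue of a (symmetric) matrix: dimension of its eigenspace
  (for symmetric matrices this coincides with the algebraic multiplicity).\<close>
definition eig_mult :: "real^'n^'n \<Rightarrow> real \<Rightarrow> nat" where
  "eig_mult M c = dim {v. M *v v = c *\<^sub>R v}"

definition is_eig :: "real^'n^'n \<Rightarrow> real \<Rightarrow> bool" where
  "is_eig M c \<longleftrightarrow> (\<exists>v. v \<noteq> 0 \<and> M *v v = c *\<^sub>R v)"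

text \<open>k-th smallest eigenvalue (counted with multiplicity) of a symmetric matrix:
  the least eigenvalue c such that the eigenvalues \<le> c have total multiplicity \<ge> k.\<close>
definition kth_eig :: "nat \<Rightarrow> real^'n^'n \<Rightarrow> real" where
  "kth_eig k M = Inf {c. is_eig M c \<and> k \<le> (\<Sum>d\<in>{d. is_eig M d \<and> d \<le> c}. eig_mult M d)}"

definition eta2 :: "real^'n^'n \<Rightarrow> real" where
  "eta2 M = kth_eig 2 M"

text \<open>Problem (P) with A_i = I_p, X_i = R^p: minimize sum f_i(x_i) s.t. sum x_i = b.\<close>
definition feasibleP :: "real^'p \<Rightarrow> real^'p^'n::finite \<Rightarrow> bool" where
  "feasibleP b x \<longleftrightarrow> (\<Sum>i\<in>UNIV. x $ i) = b"

definition optimalP :: "('n::finite \<Rightarrow> real^'p \<Rightarrow> real) \<Rightarrow> real^'p \<Rightarrow> real^'p^'n \<Rightarrow> bool" where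
  "optimalP f b x \<longleftrightarrow> feasibleP b x \<and>
     (\<forall>y. feasibleP b y \<longrightarrow> (\<Sum>i\<in>UNIV. f i (x $ i)) \<le> (\<Sum>i\<in>UNIV. f i (y $ i)))"

text \<open>(L \<otimes> I_p) applied to a stacked vector.\<close>
definition lap_apply :: "real^'n^'n \<Rightarrow> real^'p^'n::finite \<Rightarrow> real^'p^'n" where
  "lap_apply M v = (\<chi> i. \<Sum>j\<in>UNIV. (M $ i $ j) *\<^sub>R (v $ j))"

end

theory Submission
  imports Defs "HOL-Analysis.Analysis"
begin

lemma decay_lemma:
  fixes V V' :: "real \<Rightarrow> real" and r :: real
  assumes d: "\<And>t. t \<ge> 0 \<Longrightarrow> (V has_real_derivative V' t) (at t within {0..})"
    and le: "\<And>t. t \<ge> 0 \<Longrightarrow> V' t \<le> - r * V t"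
    and t: "t \<ge> 0"
  shows "V t \<le> V 0 * exp (- r * t)"
proof -
  define F where "F s = - (V s * exp (r * s))" for s
  have dF: "(F has_real_derivative (- (V' s * exp (r * s) + V s * (r * exp (r * s))))) (at s within {0..})"
    if "s \<ge> 0" for s
    unfolding F_def
    by (auto intro!: derivative_eq_intros d[OF that] simp: algebra_simps)
  have "F 0 \<le> F t"
  proof (rule DERIV_nonneg_imp_increasing_open[OF t])
    fix s assume s: "0 < s" "s < t"
    have "interior {0::real..} = {0<..}" by simp
    then have "at s within {0..} = at s" using s by (intro at_within_interior) auto
    then have "(F has_real_derivative (- (V' s * exp (r * s) + V s * (r * exp (r * s))))) (at s)"
      using dF[of s] s by simp
    moreover have "- (V' s * exp (r * s) + V s * (r * exp (r * s))) \<ge> 0"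
    proof -
      have "V' s + r * V s \<le> 0" using le[of s] s by simp
      then have "(V' s + r * V s) * exp (r * s) \<le> 0" by (simp add: mult_nonpos_nonneg)
      then show ?thesis by (simp add: algebra_simps)
    qed
    ultimately show "\<exists>y. (F has_real_derivative y) (at s) \<and> 0 \<le> y" by blast
  next
    have "continuous_on {0..} F"
      using dF by (intro continuous_on_vector_derivative)
        (auto simp: has_real_derivative_iff_has_vector_derivative[symmetric])
    then show "continuous_on {0..t} F" by (rule continuous_on_subset) auto
  qed
  then have "V t * exp (r * t) \<le> V 0" by (simp add: F_def)
  then have "V t * exp (r * t) * exp (- r * t) \<le> V 0 * exp (- r * t)" by (simp add: mult_right_mono)
  then show ?thesis by (simp add: exp_minus field_simps)
qed

lemma young: fixes a b s :: real assumes "s > 0" shows "a * b \<le> s / 2 * a^2 + 1 / (2 * s) * b^2"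
proof -
  have "0 \<le> (s * a - b)^2 / (2 * s)" using assms by simp
  also have "\<dots> = s / 2 * a^2 + 1 / (2 * s) * b^2 - a * b"
    using assms by (simp add: power2_eq_square field_simps)
  finally show ?thesis by simp
qed

lemma lyap_est:
  fixes x lm z g y :: "'v::real_inner" and Pr :: "'v \<Rightarrow> 'v"
  assumes Pr_lin: "linear Pr"
    and Pr_sa: "\<And>v w. Pr v \<bullet> w = v \<bullet> Pr w"
    and Pr_id: "\<And>v. Pr (Pr v) = Pr v"
    and al: "\<alpha> > 0" and mu: "\<mu> > 0" and K: "K \<ge> 0"
    and rho: "\<rho> > 2*\<alpha> + 1/(2*\<mu>)"
    and G1: "x \<bullet> g \<ge> \<mu> * (norm x)\<^sup>2"
    and G2: "norm g \<le> l * norm x"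
    and Y1: "Pr y = y"
    and Y2: "lm \<bullet> y \<ge> \<rho> * (norm (Pr lm))\<^sup>2"
    and Y3: "norm y \<le> K * norm (Pr lm)"
    and Z1: "Pr z = z"
    and c0_def: "c0 = min (\<alpha>*\<mu>/2) (min (1/2) (\<alpha>*(\<rho> - 2*\<alpha> - 1/(2*\<mu>))))"
    and K1_def: "K1 = \<alpha>*l^2 + 1/\<alpha> + 1 + K"
    and eps_def: "\<epsilon> = min (c0/(2*K1)) (min (1/2) (\<alpha>/4))"
    and r0_def: "r0 = min (c0/2) (\<epsilon>*\<alpha>/2)"
  shows "x \<bullet> (-(\<alpha> *\<^sub>R g) - \<alpha> *\<^sub>R lm - (x - z))
     + (1/\<alpha>) * ((z + \<alpha> *\<^sub>R lm) \<bullet> (\<alpha> *\<^sub>R y + \<alpha> *\<^sub>R ((x - z) - y)))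
     + \<alpha> * (Pr lm \<bullet> Pr ((x - z) - y))
     + \<epsilon> * (x \<bullet> ((x - z) - y) + (-(\<alpha> *\<^sub>R g) - \<alpha> *\<^sub>R lm - (x - z)) \<bullet> lm)
   \<le> - r0 * ((norm x)\<^sup>2 + (norm (x - z))\<^sup>2 + (norm lm)\<^sup>2)"
proof -
  define w where "w = x - z"
  define p where "p = Pr lm"
  have zw: "z = x - w" by (simp add: w_def)
  have pw: "p \<bullet> Pr w = p \<bullet> w" unfolding p_def by (metis Pr_sa Pr_id)
  have py: "p \<bullet> Pr y = lm \<bullet> y" unfolding p_def by (metis Pr_sa Y1)
  have lz: "lm \<bullet> z = p \<bullet> z" unfolding p_def by (metis Pr_sa Z1)
  have Prd: "Pr (w - y) = Pr w - Pr y" using Pr_lin by (simp add: linear_diff)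
  have V1: "x \<bullet> (-(\<alpha> *\<^sub>R g) - \<alpha> *\<^sub>R lm - w)
     + (1/\<alpha>) * ((z + \<alpha> *\<^sub>R lm) \<bullet> (\<alpha> *\<^sub>R y + \<alpha> *\<^sub>R (w - y)))
     + \<alpha> * (p \<bullet> Pr (w - y))
     = - \<alpha> * (x \<bullet> g) - w \<bullet> w + 2 * \<alpha> * (p \<bullet> w) - \<alpha> * (p \<bullet> x) - \<alpha> * (lm \<bullet> y)"
  proof -
    have "(1/\<alpha>) * ((z + \<alpha> *\<^sub>R lm) \<bullet> (\<alpha> *\<^sub>R y + \<alpha> *\<^sub>R (w - y))) = (z + \<alpha> *\<^sub>R lm) \<bullet> w"
      using al by (simp add: algebra_simps inner_simps)
    moreover have "\<alpha> * (p \<bullet> Pr (w - y)) = \<alpha> * (p \<bullet> w) - \<alpha> * (lm \<bullet> y)"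
      by (simp add: Prd inner_diff_right pw py algebra_simps)
    moreover have "x \<bullet> (-(\<alpha> *\<^sub>R g) - \<alpha> *\<^sub>R lm - w) + (z + \<alpha> *\<^sub>R lm) \<bullet> w
        = - \<alpha> * (x \<bullet> g) - w \<bullet> w - \<alpha> * (lm \<bullet> z)"
      by (simp add: zw inner_simps algebra_simps inner_commute)
    moreover have "\<alpha> * (lm \<bullet> z) = \<alpha> * (p \<bullet> x) - \<alpha> * (p \<bullet> w)"
    proof -
      have "lm \<bullet> z = p \<bullet> z" by (rule lz)
      also have "\<dots> = p \<bullet> x - p \<bullet> w" by (simp add: zw inner_diff_right)
      finally have "lm \<bullet> z = p \<bullet> x - p \<bullet> w" .
      then show ?thesis by (metis right_diff_distrib)
    qed
    ultimately show ?thesis by linarith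
  qed
  define X where "X = norm x"
  define W where "W = norm w"
  define P where "P = norm p"
  define L where "L = norm lm"
  define E where "E = X^2 + W^2 + P^2"
  have X0: "X \<ge> 0" "W \<ge> 0" "P \<ge> 0" "L \<ge> 0" by (auto simp: X_def W_def P_def L_def)
  have E0: "E \<ge> 0" by (simp add: E_def)
  have ww: "w \<bullet> w = W^2" by (simp add: W_def power2_norm_eq_inner)
  have ll: "lm \<bullet> lm = L^2" by (simp add: L_def power2_norm_eq_inner)
  have cs1: "p \<bullet> w \<le> P * W" unfolding P_def W_def by (rule norm_cauchy_schwarz)
  have cs2: "- (p \<bullet> x) \<le> P * X" unfolding P_def X_def
    using norm_cauchy_schwarz[of "-p" x] by simp
  have g1: "x \<bullet> g \<ge> \<mu> * X^2" using G1 by (simp add: X_def)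
  have y2: "lm \<bullet> y \<ge> \<rho> * P^2" using Y2 by (simp add: P_def p_def)
  have rpos: "\<rho> - 2*\<alpha> - 1/(2*\<mu>) > 0" using rho by simp
  have c0pos: "c0 > 0" unfolding c0_def using al mu rpos by simp
  have ya: "2 * \<alpha> * (P * W) \<le> W^2 / 2 + 2 * \<alpha>^2 * P^2"
  proof -
    have "W * (2*\<alpha>*P) \<le> 1 / 2 * W^2 + 1 / (2 * 1) * (2*\<alpha>*P)^2" by (rule young) simp
    moreover have "(2*\<alpha>*P)^2 = 4 * \<alpha>^2 * P^2" by (simp add: power_mult_distrib)
    moreover have "2 * \<alpha> * (P * W) = W * (2*\<alpha>*P)" by (simp add: algebra_simps)
    ultimately show ?thesis by linarith
  qed
  have yb: "\<alpha> * (P * X) \<le> \<alpha> * \<mu> / 2 * X^2 + \<alpha> / (2*\<mu>) * P^2"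
  proof -
    have "P * X \<le> \<mu> / 2 * X^2 + 1/(2*\<mu>) * P^2" using young[of \<mu> X P] mu by (simp add: mult.commute)
    then have "\<alpha> * (P * X) \<le> \<alpha> * (\<mu> / 2 * X^2 + 1/(2*\<mu>) * P^2)" using al by (simp add: mult_left_mono)
    then show ?thesis by (simp add: algebra_simps)
  qed
  have V1b: "- \<alpha> * (x \<bullet> g) - w \<bullet> w + 2 * \<alpha> * (p \<bullet> w) - \<alpha> * (p \<bullet> x) - \<alpha> * (lm \<bullet> y)
      \<le> - (\<alpha>*\<mu>/2) * X^2 - (1/2) * W^2 - (\<alpha>*(\<rho> - 2*\<alpha> - 1/(2*\<mu>))) * P^2"
  proof -
    have "- \<alpha> * (x \<bullet> g) \<le> - \<alpha> * (\<mu> * X^2)" using g1 al by simp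
    moreover have "2 * \<alpha> * (p \<bullet> w) \<le> 2 * \<alpha> * (P * W)" using cs1 al by simp
    moreover have "- \<alpha> * (p \<bullet> x) \<le> \<alpha> * (P * X)" using cs2 al
      using mult_left_mono[OF cs2, of \<alpha>] by simp
    moreover have "- \<alpha> * (lm \<bullet> y) \<le> - \<alpha> * (\<rho> * P^2)" using y2 al by simp
    ultimately have "- \<alpha> * (x \<bullet> g) - w \<bullet> w + 2 * \<alpha> * (p \<bullet> w) - \<alpha> * (p \<bullet> x) - \<alpha> * (lm \<bullet> y)
       \<le> - \<alpha> * (\<mu> * X^2) + \<alpha> * \<mu> / 2 * X^2 - W^2/2 + 2 * \<alpha>^2 * P^2 + \<alpha> / (2*\<mu>) * P^2 - \<alpha> * (\<rho> * P^2)"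
      using ya yb ww by linarith
    also have "\<dots> = - (\<alpha>*\<mu>/2) * X^2 - (1/2) * W^2 - (\<alpha>*(\<rho> - 2*\<alpha> - 1/(2*\<mu>))) * P^2"
      using mu by (simp add: field_simps power2_eq_square)
    finally show ?thesis .
  qed
  have V1c: "- (\<alpha>*\<mu>/2) * X^2 - (1/2) * W^2 - (\<alpha>*(\<rho> - 2*\<alpha> - 1/(2*\<mu>))) * P^2 \<le> - c0 * E"
  proof -
    have "c0 * X^2 \<le> (\<alpha>*\<mu>/2) * X^2" unfolding c0_def by (intro mult_right_mono) auto
    moreover have "c0 * W^2 \<le> (1/2) * W^2" unfolding c0_def by (intro mult_right_mono) auto
    moreover have "c0 * P^2 \<le> (\<alpha>*(\<rho> - 2*\<alpha> - 1/(2*\<mu>))) * P^2" unfolding c0_def by (intro mult_right_mono) auto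
    ultimately show ?thesis unfolding E_def by (simp add: algebra_simps)
  qed
  have K1pos: "K1 > 0"
  proof -
    have "0 \<le> \<alpha> * l^2" using al by simp
    moreover have "0 < 1 / \<alpha>" using al by simp
    ultimately show ?thesis unfolding K1_def using K by linarith
  qed
  have epspos: "\<epsilon> > 0" unfolding eps_def using c0pos K1pos al by simp
  have epsK1: "\<epsilon> * K1 \<le> c0 / 2"
  proof -
    have "\<epsilon> \<le> c0 / (2*K1)" unfolding eps_def by simp
    then have "\<epsilon> * K1 \<le> c0 / (2*K1) * K1" using K1pos by (intro mult_right_mono) simp_all
    also have "\<dots> = c0 / 2" using K1pos by simp
    finally show ?thesis .
  qed
  have lpos: "l \<ge> 0 \<or> X = 0"
  proof (cases "X = 0")
    case False
    then have "X > 0" using X0 by simp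
    moreover have "0 \<le> l * X" using G2 by (simp add: X_def) (meson norm_ge_zero order_trans)
    ultimately show ?thesis by (simp add: zero_le_mult_iff)
  qed simp
  have C1: "x \<bullet> w \<le> X^2/2 + W^2/2"
  proof -
    have "x \<bullet> w \<le> X * W" unfolding X_def W_def by (rule norm_cauchy_schwarz)
    also have "\<dots> \<le> 1/2 * X^2 + 1/(2*1) * W^2" by (rule young) simp
    finally show ?thesis by simp
  qed
  have C2: "- (x \<bullet> y) \<le> K * (X^2/2 + P^2/2)"
  proof -
    have "- (x \<bullet> y) \<le> X * norm y" unfolding X_def using norm_cauchy_schwarz[of "-x" y] by simp
    also have "\<dots> \<le> X * (K * P)" using Y3 X0 by (simp add: P_def p_def mult_left_mono)
    also have "\<dots> = K * (X * P)" by simp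
    also have "\<dots> \<le> K * (1/2 * X^2 + 1/(2*1) * P^2)" using K by (intro mult_left_mono young) simp_all
    finally show ?thesis by simp
  qed
  have C3: "- \<alpha> * (g \<bullet> lm) \<le> \<alpha> / 4 * L^2 + \<alpha> * l^2 * X^2"
  proof -
    have "- (g \<bullet> lm) \<le> norm g * L" unfolding L_def using norm_cauchy_schwarz[of "-g" lm] by simp
    also have "\<dots> \<le> l * X * L" using G2 X0 by (simp add: X_def mult_right_mono)
    also have "\<dots> = L * (l * X)" by simp
    also have "\<dots> \<le> (1/2) / 2 * L^2 + 1 / (2 * (1/2)) * (l * X)^2" by (rule young) simp
    also have "\<dots> = L^2 / 4 + l^2 * X^2" by (simp add: power_mult_distrib)
    finally have "- (g \<bullet> lm) \<le> L^2 / 4 + l^2 * X^2" .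
    then have "\<alpha> * (- (g \<bullet> lm)) \<le> \<alpha> * (L^2 / 4 + l^2 * X^2)" using al by (intro mult_left_mono) simp_all
    then show ?thesis by (simp add: algebra_simps)
  qed
  have C4: "- (w \<bullet> lm) \<le> \<alpha> / 4 * L^2 + 1 / \<alpha> * W^2"
  proof -
    have "- (w \<bullet> lm) \<le> W * L" unfolding W_def L_def using norm_cauchy_schwarz[of "-w" lm] by simp
    also have "\<dots> = L * W" by simp
    also have "\<dots> \<le> (\<alpha>/2) / 2 * L^2 + 1 / (2 * (\<alpha>/2)) * W^2" using al by (intro young) simp
    also have "\<dots> = \<alpha> / 4 * L^2 + 1 / \<alpha> * W^2" by simp
    finally show ?thesis .
  qed
  have Cd: "x \<bullet> (w - y) + (-(\<alpha> *\<^sub>R g) - \<alpha> *\<^sub>R lm - w) \<bullet> lm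
     = x \<bullet> w - x \<bullet> y - \<alpha> * (g \<bullet> lm) - \<alpha> * L^2 - w \<bullet> lm"
    by (simp add: inner_simps ll)
  have Cb: "x \<bullet> (w - y) + (-(\<alpha> *\<^sub>R g) - \<alpha> *\<^sub>R lm - w) \<bullet> lm \<le> - (\<alpha>/2) * L^2 + K1 * E"
  proof -
    have "x \<bullet> (w - y) + (-(\<alpha> *\<^sub>R g) - \<alpha> *\<^sub>R lm - w) \<bullet> lm
       \<le> - (\<alpha>/2) * L^2 + (1/2 + K/2 + \<alpha> * l^2) * X^2 + (1/2 + 1/\<alpha>) * W^2 + (K/2) * P^2"
      using C1 C2 C3 C4 unfolding Cd by (simp add: algebra_simps)
    also have "\<dots> \<le> - (\<alpha>/2) * L^2 + K1 * X^2 + K1 * W^2 + K1 * P^2"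
    proof -
      have a1: "0 < 1/\<alpha>" using al by simp
      have a2: "0 \<le> \<alpha> * l^2" using al by simp
      have "(1/2 + K/2 + \<alpha> * l^2) \<le> K1" "(1/2 + 1/\<alpha>) \<le> K1" "K/2 \<le> K1"
        unfolding K1_def using a1 a2 K by linarith+
      then have "(1/2 + K/2 + \<alpha> * l^2) * X^2 \<le> K1 * X^2"
        "(1/2 + 1/\<alpha>) * W^2 \<le> K1 * W^2" "(K/2) * P^2 \<le> K1 * P^2"
        by (intro mult_right_mono; simp)+
      then show ?thesis by linarith
    qed
    also have "\<dots> = - (\<alpha>/2) * L^2 + K1 * E" by (simp add: E_def algebra_simps)
    finally show ?thesis .
  qed
  have epsC: "\<epsilon> * (x \<bullet> (w - y) + (-(\<alpha> *\<^sub>R g) - \<alpha> *\<^sub>R lm - w) \<bullet> lm)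
      \<le> - (\<epsilon>*\<alpha>/2) * L^2 + c0/2 * E"
  proof -
    have "\<epsilon> * (x \<bullet> (w - y) + (-(\<alpha> *\<^sub>R g) - \<alpha> *\<^sub>R lm - w) \<bullet> lm) \<le> \<epsilon> * (- (\<alpha>/2) * L^2 + K1 * E)"
      using Cb epspos by (simp add: mult_left_mono)
    also have "\<dots> = - (\<epsilon>*\<alpha>/2) * L^2 + (\<epsilon> * K1) * E" by (simp add: algebra_simps)
    also have "\<dots> \<le> - (\<epsilon>*\<alpha>/2) * L^2 + c0/2 * E"
      using mult_right_mono[OF epsK1 E0] by simp
    finally show ?thesis .
  qed
  have fin: "- c0 * E + (- (\<epsilon>*\<alpha>/2) * L^2 + c0/2 * E) \<le> - r0 * (X^2 + W^2 + L^2)"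
  proof -
    have "r0 * X^2 \<le> c0/2 * X^2" unfolding r0_def by (intro mult_right_mono) auto
    moreover have "r0 * W^2 \<le> c0/2 * W^2" unfolding r0_def by (intro mult_right_mono) auto
    moreover have "r0 * L^2 \<le> (\<epsilon>*\<alpha>/2) * L^2" unfolding r0_def by (intro mult_right_mono) auto
    moreover have "0 \<le> c0/2 * P^2" using c0pos by simp
    ultimately show ?thesis unfolding E_def by (simp add: algebra_simps)
  qed
  have "x \<bullet> (-(\<alpha> *\<^sub>R g) - \<alpha> *\<^sub>R lm - w)
     + (1/\<alpha>) * ((z + \<alpha> *\<^sub>R lm) \<bullet> (\<alpha> *\<^sub>R y + \<alpha> *\<^sub>R (w - y)))
     + \<alpha> * (p \<bullet> Pr (w - y))
     + \<epsilon> * (x \<bullet> (w - y) + (-(\<alpha> *\<^sub>R g) - \<alpha> *\<^sub>R lm - w) \<bullet> lm)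
     \<le> - r0 * (X^2 + W^2 + L^2)"
    using V1 V1b V1c epsC fin by linarith
  then show ?thesis unfolding X_def W_def L_def w_def p_def .
qed

lemma sq_sum_le: fixes a b :: "'v::real_inner" shows "(norm (a + b))^2 \<le> 2 * (norm a)^2 + 2 * (norm b)^2"
proof -
  have "(norm (a + b))^2 \<le> (norm a + norm b)^2" by (simp add: norm_triangle_ineq power_mono)
  also have "\<dots> \<le> 2 * (norm a)^2 + 2 * (norm b)^2" using young[of 1 "norm a" "norm b"] by (simp add: power2_eq_square algebra_simps)
  finally show ?thesis .
qed

lemma V_bounds:
  fixes x lm z :: "'v::real_inner" and Pr :: "'v \<Rightarrow> 'v"
  assumes Pr_lin: "linear Pr"
    and Pr_sa: "\<And>v w. Pr v \<bullet> w = v \<bullet> Pr w"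
    and Pr_id: "\<And>v. Pr (Pr v) = Pr v"
    and al: "\<alpha> > 0" and Z1: "Pr z = z"
    and e1: "0 < \<epsilon>" and e2: "\<epsilon> \<le> 1/2" and e3: "\<epsilon> \<le> \<alpha>/4"
    and V_def: "V = 1/2 * (x \<bullet> x) + 1/(2*\<alpha>) * ((z + \<alpha> *\<^sub>R lm) \<bullet> (z + \<alpha> *\<^sub>R lm))
                 + \<alpha>/2 * (Pr lm \<bullet> Pr lm) + \<epsilon> * (x \<bullet> lm)"
  shows "min (1/4) (min (1/(8*\<alpha>)) (\<alpha>/8)) * ((norm x)^2 + (norm lm)^2 + (norm z)^2) \<le> V"
    and "V \<le> (2 + 1/\<alpha> + 2*\<alpha>) * ((norm x)^2 + (norm lm)^2 + (norm z)^2)"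
proof -
  define p where "p = Pr lm"
  define d where "d = lm - p"
  have orth: "y \<bullet> d = 0" if "Pr y = y" for y
  proof -
    have "y \<bullet> lm = Pr y \<bullet> lm" using that by simp
    also have "\<dots> = y \<bullet> p" by (simp add: Pr_sa p_def)
    finally show ?thesis by (simp add: d_def inner_diff_right)
  qed
  have Prp: "Pr p = p" by (simp add: p_def Pr_id)
  have Przp: "Pr (z + \<alpha> *\<^sub>R p) = z + \<alpha> *\<^sub>R p"
    using Pr_lin Z1 Prp by (simp add: linear_add linear_scale)
  have lmdec: "lm = p + d" by (simp add: d_def)
  define X where "X = norm x"
  define L where "L = norm lm"
  define Z where "Z = norm z"
  define P where "P = norm p"
  define D where "D = norm d"
  define S where "S = (norm (z + \<alpha> *\<^sub>R p))^2"
  have LPD: "L^2 = P^2 + D^2"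
  proof -
    have "L^2 = (p + d) \<bullet> (p + d)" by (simp add: L_def lmdec power2_norm_eq_inner)
    also have "\<dots> = p \<bullet> p + d \<bullet> d" using orth[OF Prp] by (simp add: inner_simps inner_commute)
    finally show ?thesis by (simp add: P_def D_def power2_norm_eq_inner)
  qed
  have U: "(z + \<alpha> *\<^sub>R lm) \<bullet> (z + \<alpha> *\<^sub>R lm) = S + \<alpha>^2 * D^2"
  proof -
    have e: "z + \<alpha> *\<^sub>R lm = (z + \<alpha> *\<^sub>R p) + \<alpha> *\<^sub>R d" by (simp add: lmdec algebra_simps)
    have o: "(z + \<alpha> *\<^sub>R p) \<bullet> d = 0" using orth[OF Przp] .
    show ?thesis unfolding e S_def D_def power2_norm_eq_inner
      using o by (simp add: inner_simps inner_commute power2_eq_square)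
         (metis distrib_left mult_zero_right)
  qed
  have xx: "x \<bullet> x = X^2" by (simp add: X_def power2_norm_eq_inner)
  have pp: "Pr lm \<bullet> Pr lm = P^2" by (simp add: P_def p_def power2_norm_eq_inner)
  have Vs: "V = 1/2 * X^2 + 1/(2*\<alpha>) * (S + \<alpha>^2 * D^2) + \<alpha>/2 * P^2 + \<epsilon> * (x \<bullet> lm)"
    unfolding V_def U xx pp ..
  have xl: "\<bar>x \<bullet> lm\<bar> \<le> X^2/2 + L^2/2"
  proof -
    have "\<bar>x \<bullet> lm\<bar> \<le> X * L" unfolding X_def L_def by (rule Cauchy_Schwarz_ineq2)
    also have "\<dots> \<le> 1/2 * X^2 + 1/(2*1) * L^2" by (rule young) simp
    finally show ?thesis by simp
  qed
  have exl: "\<bar>\<epsilon> * (x \<bullet> lm)\<bar> \<le> \<epsilon> * (X^2/2 + L^2/2)"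
    using mult_left_mono[OF xl, of \<epsilon>] e1 by (simp add: abs_mult)
  have Zb: "Z^2 \<le> 2 * S + 2 * \<alpha>^2 * P^2"
  proof -
    have "Z^2 = (norm ((z + \<alpha> *\<^sub>R p) + (- \<alpha>) *\<^sub>R p))^2" by (simp add: Z_def)
    also have "\<dots> \<le> 2 * S + 2 * (norm ((- \<alpha>) *\<^sub>R p))^2" unfolding S_def by (rule sq_sum_le)
    also have "(norm ((- \<alpha>) *\<^sub>R p))^2 = \<alpha>^2 * P^2" by (simp add: P_def power_mult_distrib)
    finally show ?thesis by simp
  qed
  have Sb: "S \<le> 2 * Z^2 + 2 * \<alpha>^2 * L^2"
  proof -
    have "S \<le> (norm (z + \<alpha> *\<^sub>R lm))^2"
      using U by (simp add: power2_norm_eq_inner)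
    also have "\<dots> \<le> 2 * Z^2 + 2 * (norm (\<alpha> *\<^sub>R lm))^2" unfolding Z_def by (rule sq_sum_le)
    also have "(norm (\<alpha> *\<^sub>R lm))^2 = \<alpha>^2 * L^2" by (simp add: L_def power_mult_distrib)
    finally show ?thesis by simp
  qed
  have S0: "S \<ge> 0" by (simp add: S_def)
  have ia: "1/(2*\<alpha>) * (S + \<alpha>^2 * D^2) = S/(2*\<alpha>) + \<alpha>/2 * D^2"
    using al by (simp add: field_simps power2_eq_square)
  show "min (1/4) (min (1/(8*\<alpha>)) (\<alpha>/8)) * ((norm x)^2 + (norm lm)^2 + (norm z)^2) \<le> V"
  proof -
    have "S/(2*\<alpha>) \<ge> S/(4*\<alpha>)" using S0 al by (simp add: frac_le)
    moreover have "S/(4*\<alpha>) \<ge> Z^2/(8*\<alpha>) - \<alpha>/4 * P^2"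
    proof -
      have "Z^2/(8*\<alpha>) \<le> (2 * S + 2 * \<alpha>^2 * P^2)/(8*\<alpha>)" using Zb al by (simp add: divide_right_mono)
      also have "\<dots> = S/(4*\<alpha>) + \<alpha>/4 * P^2" using al by (simp add: field_simps power2_eq_square)
      finally show ?thesis by simp
    qed
    ultimately have "V \<ge> 1/2 * X^2 + Z^2/(8*\<alpha>) + \<alpha>/4 * P^2 + \<alpha>/2 * D^2 - \<epsilon> * (X^2/2 + L^2/2)"
      using Vs ia exl by linarith
    moreover have "\<alpha>/4 * P^2 + \<alpha>/2 * D^2 \<ge> \<alpha>/4 * L^2"
      using LPD al by (simp add: algebra_simps)
    moreover have "\<epsilon> * (X^2/2 + L^2/2) \<le> 1/4 * X^2 + \<alpha>/8 * L^2"
    proof -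
      have "\<epsilon> * X^2 \<le> 1/2 * X^2" using e2 by (intro mult_right_mono) simp_all
      moreover have "\<epsilon> * L^2 \<le> \<alpha>/4 * L^2" using e3 by (intro mult_right_mono) simp_all
      ultimately show ?thesis by (simp add: algebra_simps)
    qed
    ultimately have V2: "V \<ge> 1/4 * X^2 + 1/(8*\<alpha>) * Z^2 + \<alpha>/8 * L^2" by simp
    define m where "m = min (1/4) (min (1/(8*\<alpha>)) (\<alpha>/8))"
    have "m * X^2 \<le> 1/4 * X^2" "m * Z^2 \<le> 1/(8*\<alpha>) * Z^2" "m * L^2 \<le> \<alpha>/8 * L^2"
      unfolding m_def by (intro mult_right_mono; simp)+
    then have "m * (X^2 + L^2 + Z^2) \<le> V" using V2 by (simp add: algebra_simps)
    then show ?thesis by (simp add: m_def X_def L_def Z_def)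
  qed
  show "V \<le> (2 + 1/\<alpha> + 2*\<alpha>) * ((norm x)^2 + (norm lm)^2 + (norm z)^2)"
  proof -
    have "S/(2*\<alpha>) \<le> (2 * Z^2 + 2 * \<alpha>^2 * L^2)/(2*\<alpha>)" using Sb al by (simp add: divide_right_mono)
    also have "\<dots> = Z^2/\<alpha> + \<alpha> * L^2" using al by (simp add: field_simps power2_eq_square)
    finally have s1: "S/(2*\<alpha>) \<le> Z^2/\<alpha> + \<alpha> * L^2" .
    have s2: "\<alpha>/2 * D^2 + \<alpha>/2 * P^2 = \<alpha>/2 * L^2" using LPD by (simp add: algebra_simps)
    have s3: "\<epsilon> * (X^2/2 + L^2/2) \<le> X^2 + L^2"
    proof -
      have "\<epsilon> * X^2 \<le> 1/2 * X^2" using e2 by (intro mult_right_mono) simp_all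
      moreover have "\<epsilon> * L^2 \<le> 1/2 * L^2" using e2 by (intro mult_right_mono) simp_all
      moreover have "\<epsilon> * (X^2/2 + L^2/2) = (\<epsilon>*X^2)/2 + (\<epsilon>*L^2)/2" by (simp add: algebra_simps)
      moreover have "0 \<le> X^2" "0 \<le> L^2" by simp_all
      ultimately show ?thesis by linarith
    qed
    have v1: "V \<le> 1/2*X^2 + (Z^2/\<alpha> + \<alpha>*L^2) + \<alpha>/2*L^2 + (X^2 + L^2)"
      using Vs ia exl s1 s2 s3 by linarith
    define M where "M = 2 + 1/\<alpha> + 2*\<alpha>"
    have a1: "0 < 1/\<alpha>" using al by simp
    have "3/2 \<le> M" "1/\<alpha> \<le> M" "3/2*\<alpha> + 1 \<le> M" unfolding M_def using a1 al by linarith+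
    then have "3/2 * X^2 \<le> M * X^2" "1/\<alpha> * Z^2 \<le> M * Z^2" "(3/2*\<alpha> + 1) * L^2 \<le> M * L^2"
      by (intro mult_right_mono; simp)+
    then have "V \<le> M * (X^2 + L^2 + Z^2)" using v1 by (simp add: algebra_simps)
    then show ?thesis by (simp add: M_def X_def L_def Z_def)
  qed
qed

lemma hvd_inner:
  fixes f g :: "real \<Rightarrow> 'v::real_inner"
  assumes "(f has_vector_derivative f') (at t within s)" "(g has_vector_derivative g') (at t within s)"
  shows "((\<lambda>t. f t \<bullet> g t) has_real_derivative (f t \<bullet> g' + f' \<bullet> g t)) (at t within s)"
  using bounded_bilinear.has_vector_derivative[OF bounded_bilinear_inner assms]
  by (simp add: has_real_derivative_iff_has_vector_derivative)

lemma abstract_decay: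
  fixes X Lm Z G Y :: "real \<Rightarrow> 'v::real_inner" and Pr :: "'v \<Rightarrow> 'v"
  assumes Pr_lin: "bounded_linear Pr"
    and Pr_sa: "\<And>v w. Pr v \<bullet> w = v \<bullet> Pr w"
    and Pr_id: "\<And>v. Pr (Pr v) = Pr v"
    and al: "\<alpha> > 0" and mu: "\<mu> > 0" and K: "K \<ge> 0"
    and rho: "\<rho> > 2*\<alpha> + 1/(2*\<mu>)"
    and dX: "\<And>t. t \<ge> 0 \<Longrightarrow> (X has_vector_derivative (-(\<alpha> *\<^sub>R G t) - \<alpha> *\<^sub>R Lm t - (X t - Z t))) (at t within {0..})"
    and dL: "\<And>t. t \<ge> 0 \<Longrightarrow> (Lm has_vector_derivative ((X t - Z t) - Y t)) (at t within {0..})"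
    and dZ: "\<And>t. t \<ge> 0 \<Longrightarrow> (Z has_vector_derivative (\<alpha> *\<^sub>R Y t)) (at t within {0..})"
    and G1: "\<And>t. t \<ge> 0 \<Longrightarrow> X t \<bullet> G t \<ge> \<mu> * (norm (X t))\<^sup>2"
    and G2: "\<And>t. t \<ge> 0 \<Longrightarrow> norm (G t) \<le> l * norm (X t)"
    and Y1: "\<And>t. t \<ge> 0 \<Longrightarrow> Pr (Y t) = Y t"
    and Y2: "\<And>t. t \<ge> 0 \<Longrightarrow> Lm t \<bullet> Y t \<ge> \<rho> * (norm (Pr (Lm t)))\<^sup>2"
    and Y3: "\<And>t. t \<ge> 0 \<Longrightarrow> norm (Y t) \<le> K * norm (Pr (Lm t))"
    and Z1: "\<And>t. t \<ge> 0 \<Longrightarrow> Pr (Z t) = Z t"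
  shows "\<exists>C c. C > 0 \<and> c > 0 \<and> (\<forall>t\<ge>0. (norm (X t))\<^sup>2 + (norm (Lm t))\<^sup>2 + (norm (Z t))\<^sup>2 \<le> C * exp (- c * t))"
proof -
  have Pr_l: "linear Pr" using Pr_lin bounded_linear.linear by blast
  define c0 where "c0 = min (\<alpha>*\<mu>/2) (min (1/2) (\<alpha>*(\<rho> - 2*\<alpha> - 1/(2*\<mu>))))"
  define K1 where "K1 = \<alpha>*l^2 + 1/\<alpha> + 1 + K"
  define \<epsilon> where "\<epsilon> = min (c0/(2*K1)) (min (1/2) (\<alpha>/4))"
  define r0 where "r0 = min (c0/2) (\<epsilon>*\<alpha>/2)"
  have rpos: "\<rho> - 2*\<alpha> - 1/(2*\<mu>) > 0" using rho by simp
  have c0pos: "c0 > 0" unfolding c0_def using al mu rpos by simp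
  have K1pos: "K1 > 0"
  proof -
    have "0 \<le> \<alpha> * l^2" using al by simp
    moreover have "0 < 1 / \<alpha>" using al by simp
    ultimately show ?thesis unfolding K1_def using K by linarith
  qed
  have epspos: "\<epsilon> > 0" unfolding \<epsilon>_def using c0pos K1pos al by simp
  have e2: "\<epsilon> \<le> 1/2" "\<epsilon> \<le> \<alpha>/4" unfolding \<epsilon>_def by simp_all
  have r0pos: "r0 > 0" unfolding r0_def using c0pos epspos al by simp
  define M where "M = 2 + 1/\<alpha> + 2*\<alpha>"
  define m where "m = min (1/4) (min (1/(8*\<alpha>)) (\<alpha>/8))"
  have Mpos: "M > 0" unfolding M_def using al by (simp add: add_pos_pos)
  have mpos: "m > 0" unfolding m_def using al by simp
  define V where "V t = 1/2 * (X t \<bullet> X t) + 1/(2*\<alpha>) * ((Z t + \<alpha> *\<^sub>R Lm t) \<bullet> (Z t + \<alpha> *\<^sub>R Lm t))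
                 + \<alpha>/2 * (Pr (Lm t) \<bullet> Pr (Lm t)) + \<epsilon> * (X t \<bullet> Lm t)" for t
  define V' where "V' t = X t \<bullet> (-(\<alpha> *\<^sub>R G t) - \<alpha> *\<^sub>R Lm t - (X t - Z t))
     + (1/\<alpha>) * ((Z t + \<alpha> *\<^sub>R Lm t) \<bullet> (\<alpha> *\<^sub>R Y t + \<alpha> *\<^sub>R ((X t - Z t) - Y t)))
     + \<alpha> * (Pr (Lm t) \<bullet> Pr ((X t - Z t) - Y t))
     + \<epsilon> * (X t \<bullet> ((X t - Z t) - Y t) + (-(\<alpha> *\<^sub>R G t) - \<alpha> *\<^sub>R Lm t - (X t - Z t)) \<bullet> Lm t)" for t
  define N where "N t = (norm (X t))\<^sup>2 + (norm (Lm t))\<^sup>2 + (norm (Z t))\<^sup>2" for t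
  have Vlow: "m * N t \<le> V t" if "t \<ge> 0" for t
    unfolding m_def N_def
    by (rule V_bounds(1)[OF Pr_l Pr_sa Pr_id al Z1[OF that] epspos e2]) (simp add: V_def)
  have Vup: "V t \<le> M * N t" if "t \<ge> 0" for t
    unfolding M_def N_def
    by (rule V_bounds(2)[OF Pr_l Pr_sa Pr_id al Z1[OF that] epspos e2]) (simp add: V_def)
  have dV: "(V has_real_derivative V' t) (at t within {0..})" if t: "t \<ge> 0" for t
  proof -
    have dU: "((\<lambda>t. Z t + \<alpha> *\<^sub>R Lm t) has_vector_derivative (\<alpha> *\<^sub>R Y t + \<alpha> *\<^sub>R ((X t - Z t) - Y t))) (at t within {0..})"
      by (intro has_vector_derivative_add dZ[OF t]
          bounded_linear.has_vector_derivative[OF bounded_linear_scaleR_right dL[OF t]])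
    have dP: "((\<lambda>t. Pr (Lm t)) has_vector_derivative Pr ((X t - Z t) - Y t)) (at t within {0..})"
      by (rule bounded_linear.has_vector_derivative[OF Pr_lin dL[OF t]])
    have "(V has_real_derivative
        (1/2 * (X t \<bullet> (-(\<alpha> *\<^sub>R G t) - \<alpha> *\<^sub>R Lm t - (X t - Z t)) + (-(\<alpha> *\<^sub>R G t) - \<alpha> *\<^sub>R Lm t - (X t - Z t)) \<bullet> X t)
        + 1/(2*\<alpha>) * ((Z t + \<alpha> *\<^sub>R Lm t) \<bullet> (\<alpha> *\<^sub>R Y t + \<alpha> *\<^sub>R ((X t - Z t) - Y t)) + (\<alpha> *\<^sub>R Y t + \<alpha> *\<^sub>R ((X t - Z t) - Y t)) \<bullet> (Z t + \<alpha> *\<^sub>R Lm t))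
        + \<alpha>/2 * (Pr (Lm t) \<bullet> Pr ((X t - Z t) - Y t) + Pr ((X t - Z t) - Y t) \<bullet> Pr (Lm t))
        + \<epsilon> * (X t \<bullet> ((X t - Z t) - Y t) + (-(\<alpha> *\<^sub>R G t) - \<alpha> *\<^sub>R Lm t - (X t - Z t)) \<bullet> Lm t)))
        (at t within {0..})"
      unfolding V_def
      apply (rule DERIV_add)+
         apply (rule DERIV_cmult, rule hvd_inner[OF dX[OF t] dX[OF t]])
        apply (rule DERIV_cmult, rule hvd_inner[OF dU dU])
       apply (rule DERIV_cmult, rule hvd_inner[OF dP dP])
      apply (rule DERIV_cmult, rule hvd_inner[OF dX[OF t] dL[OF t]])
      done
    moreover have "1/2 * (X t \<bullet> (-(\<alpha> *\<^sub>R G t) - \<alpha> *\<^sub>R Lm t - (X t - Z t)) + (-(\<alpha> *\<^sub>R G t) - \<alpha> *\<^sub>R Lm t - (X t - Z t)) \<bullet> X t)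
        + 1/(2*\<alpha>) * ((Z t + \<alpha> *\<^sub>R Lm t) \<bullet> (\<alpha> *\<^sub>R Y t + \<alpha> *\<^sub>R ((X t - Z t) - Y t)) + (\<alpha> *\<^sub>R Y t + \<alpha> *\<^sub>R ((X t - Z t) - Y t)) \<bullet> (Z t + \<alpha> *\<^sub>R Lm t))
        + \<alpha>/2 * (Pr (Lm t) \<bullet> Pr ((X t - Z t) - Y t) + Pr ((X t - Z t) - Y t) \<bullet> Pr (Lm t))
        + \<epsilon> * (X t \<bullet> ((X t - Z t) - Y t) + (-(\<alpha> *\<^sub>R G t) - \<alpha> *\<^sub>R Lm t - (X t - Z t)) \<bullet> Lm t) = V' t"
      unfolding V'_def by (simp add: inner_commute[of _ "X t"] inner_commute[of _ "Z t + \<alpha> *\<^sub>R Lm t"] inner_commute[of _ "Pr (Lm t)"])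
    ultimately show ?thesis by simp
  qed
  have dVle: "V' t \<le> - (r0 / (3*M)) * V t" if t: "t \<ge> 0" for t
  proof -
    have e: "V' t \<le> - r0 * ((norm (X t))\<^sup>2 + (norm (X t - Z t))\<^sup>2 + (norm (Lm t))\<^sup>2)"
      unfolding V'_def
      by (rule lyap_est[OF Pr_l Pr_sa Pr_id al mu K rho G1[OF t] G2[OF t] Y1[OF t] Y2[OF t] Y3[OF t] Z1[OF t]
            c0_def K1_def \<epsilon>_def r0_def])
    have "(norm (Z t))\<^sup>2 \<le> 2 * (norm (X t))\<^sup>2 + 2 * (norm (- (X t - Z t)))\<^sup>2"
      using sq_sum_le[of "X t" "- (X t - Z t)"] by simp
    then have "(norm (Z t))\<^sup>2 \<le> 2 * (norm (X t))\<^sup>2 + 2 * (norm (X t - Z t))\<^sup>2"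
      by (simp add: norm_minus_commute)
    moreover have "0 \<le> (norm (Lm t))\<^sup>2" "0 \<le> (norm (X t - Z t))\<^sup>2" "0 \<le> (norm (X t))\<^sup>2" by simp_all
    ultimately have "N t \<le> 3 * ((norm (X t))\<^sup>2 + (norm (X t - Z t))\<^sup>2 + (norm (Lm t))\<^sup>2)"
      unfolding N_def distrib_left by linarith
    then have "V t \<le> 3 * M * ((norm (X t))\<^sup>2 + (norm (X t - Z t))\<^sup>2 + (norm (Lm t))\<^sup>2)"
    proof -
      have "M * N t \<le> M * (3 * ((norm (X t))\<^sup>2 + (norm (X t - Z t))\<^sup>2 + (norm (Lm t))\<^sup>2))"
        using Mpos \<open>N t \<le> _\<close> by (intro mult_left_mono) simp_all
      moreover have "M * (3 * ((norm (X t))\<^sup>2 + (norm (X t - Z t))\<^sup>2 + (norm (Lm t))\<^sup>2))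
         = 3 * M * ((norm (X t))\<^sup>2 + (norm (X t - Z t))\<^sup>2 + (norm (Lm t))\<^sup>2)" by (simp add: algebra_simps)
      ultimately show ?thesis using Vup[OF t] by linarith
    qed
    then have "V t / (3*M) \<le> ((norm (X t))\<^sup>2 + (norm (X t - Z t))\<^sup>2 + (norm (Lm t))\<^sup>2)"
      using Mpos by (simp add: field_simps)
    then have "r0 * (V t / (3*M)) \<le> r0 * ((norm (X t))\<^sup>2 + (norm (X t - Z t))\<^sup>2 + (norm (Lm t))\<^sup>2)"
      using r0pos by (intro mult_left_mono) simp_all
    then show ?thesis using e by simp
  qed
  define r where "r = r0 / (3*M)"
  have rpos': "r > 0" unfolding r_def using r0pos Mpos by simp
  have dec: "V t \<le> V 0 * exp (- r * t)" if "t \<ge> 0" for t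
    by (rule decay_lemma[OF dV dVle[unfolded r_def[symmetric]] that])
  have V00: "V 0 \<ge> 0" using Vlow[of 0] mpos by (smt (verit) N_def mult_nonneg_nonneg zero_le_power2)
  show ?thesis
  proof (intro exI conjI allI impI)
    show "V 0 / m + 1 > 0" using V00 mpos by (simp add: add_nonneg_pos)
    show "r > 0" by (rule rpos')
    fix t :: real assume t: "t \<ge> 0"
    have "m * N t \<le> V 0 * exp (- r * t)" using Vlow[OF t] dec[OF t] by simp
    then have "N t \<le> V 0 / m * exp (- r * t)" using mpos by (simp add: field_simps)
    also have "\<dots> \<le> (V 0 / m + 1) * exp (- r * t)" by (intro mult_right_mono) simp_all
    finally show "(norm (X t))\<^sup>2 + (norm (Lm t))\<^sup>2 + (norm (Z t))\<^sup>2 \<le> (V 0 / m + 1) * exp (- r * t)"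
      by (simp add: N_def)
  qed
qed

lemma grad_ineq:
  fixes f :: "'a::real_inner \<Rightarrow> real"
  assumes d: "(f has_derivative (\<lambda>h. gx \<bullet> h)) (at x)"
    and sc: "strongly_convex_on \<mu> UNIV f"
  shows "f y \<ge> f x + gx \<bullet> (y - x) + \<mu>/2 * (norm (y - x))\<^sup>2"
proof -
  define dd where "dd = y - x"
  define \<phi> where "\<phi> t = f (x + t *\<^sub>R dd)" for t :: real
  have "((\<lambda>t. x + t *\<^sub>R dd) has_derivative (\<lambda>t. t *\<^sub>R dd)) (at 0)"
    by (auto intro!: derivative_eq_intros)
  from has_derivative_compose[OF this, of f "\<lambda>h. gx \<bullet> h"] d
  have "(\<phi> has_derivative (\<lambda>t. gx \<bullet> (t *\<^sub>R dd))) (at 0)" unfolding \<phi>_def o_def by simp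
  then have "(\<phi> has_real_derivative (gx \<bullet> dd)) (at 0)"
    by (simp add: has_field_derivative_def mult.commute[of _ "gx \<bullet> dd"])
  then have lim: "((\<lambda>h. (\<phi> (0 + h) - \<phi> 0) / h) \<longlongrightarrow> gx \<bullet> dd) (at 0)"
    by (simp add: has_field_derivative_iff)
  then have lim': "((\<lambda>h. (\<phi> h - \<phi> 0) / h) \<longlongrightarrow> gx \<bullet> dd) (at_right 0)"
    by (simp add: filterlim_at_split)
  have lim2: "((\<lambda>t. f y - f x - \<mu>/2 * (1 - t) * (norm dd)\<^sup>2) \<longlongrightarrow> f y - f x - \<mu>/2 * (1 - 0) * (norm dd)\<^sup>2) (at_right 0)"
    by (intro tendsto_intros)
  have ev: "eventually (\<lambda>t. (\<phi> t - \<phi> 0) / t \<le> f y - f x - \<mu>/2 * (1 - t) * (norm dd)\<^sup>2) (at_right 0)"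
    unfolding eventually_at_right[OF zero_less_one]
  proof (intro exI conjI allI impI)
    show "(1::real) > 0" by simp
    fix t :: real assume t: "0 < t" "t < 1"
    have "\<phi> t = f (t *\<^sub>R y + (1 - t) *\<^sub>R x)"
      by (simp add: \<phi>_def dd_def algebra_simps)
    also have "\<dots> \<le> t * f y + (1 - t) * f x - \<mu> / 2 * t * (1 - t) * (norm (y - x))\<^sup>2"
      using sc t unfolding strongly_convex_on_def by auto
    finally have "\<phi> t - \<phi> 0 \<le> t * (f y - f x - \<mu>/2 * (1 - t) * (norm dd)\<^sup>2)"
      by (simp add: \<phi>_def dd_def algebra_simps)
    then show "(\<phi> t - \<phi> 0) / t \<le> f y - f x - \<mu>/2 * (1 - t) * (norm dd)\<^sup>2"
      using t by (simp add: divide_le_eq mult.commute)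
  qed
  have "gx \<bullet> dd \<le> f y - f x - \<mu>/2 * (1 - 0) * (norm dd)\<^sup>2"
    by (rule tendsto_le[OF trivial_limit_at_right_real lim2 lim' ev])
  then show ?thesis by (simp add: dd_def)
qed

definition one_vec :: "real^'n" where "one_vec = (\<chi> i. 1)"

lemma lap_entry: "laplacian a $ i $ j = (if i = j then (\<Sum>k\<in>UNIV. a i k) else 0) - a i j"
  by (simp add: laplacian_def)

lemma sym_entry: "sym_part M $ i $ j = (M $ i $ j + M $ j $ i) / 2"
  by (simp add: sym_part_def transpose_def)

lemma mv_entry: "(M *v u) $ i = (\<Sum>j\<in>UNIV. M $ i $ j * u $ j)"
  by (simp add: matrix_vector_mult_def)

lemma inner_real_vec: "(u::real^'n) \<bullet> w = (\<Sum>i\<in>UNIV. u $ i * w $ i)"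
  by (simp add: inner_vec_def)

lemma sym_inner:
  fixes M :: "real^'n^'n"
  assumes "\<And>i j. M $ i $ j = M $ j $ i"
  shows "(M *v u) \<bullet> w = u \<bullet> (M *v w)"
proof -
  have "(M *v u) \<bullet> w = (\<Sum>i\<in>UNIV. \<Sum>j\<in>UNIV. M $ i $ j * u $ j * w $ i)"
    by (simp add: inner_real_vec mv_entry sum_distrib_right)
  also have "\<dots> = (\<Sum>j\<in>UNIV. \<Sum>i\<in>UNIV. M $ i $ j * u $ j * w $ i)" by (rule sum.swap)
  also have "\<dots> = u \<bullet> (M *v w)"
    by (simp add: inner_real_vec mv_entry sum_distrib_left assms[of _ "_"] algebra_simps)
  finally show ?thesis .
qed

lemma sym_part_sym: "sym_part M $ i $ j = sym_part M $ j $ i"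
  by (simp add: sym_entry add.commute)

definition qf :: "('n::finite \<Rightarrow> 'n \<Rightarrow> real) \<Rightarrow> real^'n \<Rightarrow> real" where
  "qf a u = u \<bullet> (sym_part (laplacian a) *v u)"

lemma qf_double_sum: "qf a u = (\<Sum>i\<in>UNIV. \<Sum>j\<in>UNIV. laplacian a $ i $ j * u $ i * u $ j)"
proof -
  have "qf a u = (\<Sum>i\<in>UNIV. \<Sum>j\<in>UNIV. (laplacian a $ i $ j + laplacian a $ j $ i) / 2 * u $ i * u $ j)"
    by (simp add: qf_def inner_real_vec mv_entry sym_entry sum_distrib_left algebra_simps)
  also have "\<dots> = (\<Sum>i\<in>UNIV. \<Sum>j\<in>UNIV. laplacian a $ i $ j * u $ i * u $ j) / 2
       + (\<Sum>i\<in>UNIV. \<Sum>j\<in>UNIV. laplacian a $ j $ i * u $ i * u $ j) / 2"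
    by (simp add: add_divide_distrib distrib_right sum.distrib sum_divide_distrib)
  also have "(\<Sum>i\<in>UNIV. \<Sum>j\<in>UNIV. laplacian a $ j $ i * u $ i * u $ j)
      = (\<Sum>i\<in>UNIV. \<Sum>j\<in>UNIV. laplacian a $ i $ j * u $ i * u $ j)"
    by (subst sum.swap) (simp add: algebra_simps)
  finally show ?thesis by simp
qed

lemma qf_edges:
  assumes wb: "weight_balanced a"
  shows "qf a u = (\<Sum>i\<in>UNIV. \<Sum>j\<in>UNIV. a i j * (u $ i - u $ j)^2) / 2"
proof -
  have A: "(\<Sum>i\<in>UNIV. \<Sum>j\<in>UNIV. laplacian a $ i $ j * u $ i * u $ j)
     = (\<Sum>i\<in>UNIV. (\<Sum>k\<in>UNIV. a i k) * (u $ i)^2) - (\<Sum>i\<in>UNIV. \<Sum>j\<in>UNIV. a i j * u $ i * u $ j)"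
  proof -
    have r: "\<And>i. (\<Sum>j\<in>UNIV. laplacian a $ i $ j * u $ i * u $ j)
       = (\<Sum>k\<in>UNIV. a i k) * (u $ i)^2 - (\<Sum>j\<in>UNIV. a i j * u $ i * u $ j)"
    proof -
      fix i
      have "(\<Sum>j\<in>UNIV. laplacian a $ i $ j * u $ i * u $ j)
         = (\<Sum>j\<in>UNIV. (if i = j then (\<Sum>k\<in>UNIV. a i k) * u $ i * u $ j else 0) - a i j * u $ i * u $ j)"
        by (intro sum.cong) (auto simp: lap_entry algebra_simps)
      also have "\<dots> = (\<Sum>k\<in>UNIV. a i k) * (u $ i)^2 - (\<Sum>j\<in>UNIV. a i j * u $ i * u $ j)"
        by (simp add: sum_subtractf power2_eq_square)
      finally show "?thesis i" .
    qed
    show ?thesis by (simp add: r sum_subtractf)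
  qed
  have B: "(\<Sum>i\<in>UNIV. \<Sum>j\<in>UNIV. a i j * (u $ j)^2) = (\<Sum>i\<in>UNIV. (\<Sum>k\<in>UNIV. a i k) * (u $ i)^2)"
  proof -
    have "(\<Sum>i\<in>UNIV. \<Sum>j\<in>UNIV. a i j * (u $ j)^2) = (\<Sum>j\<in>UNIV. (\<Sum>i\<in>UNIV. a i j) * (u $ j)^2)"
      by (subst sum.swap) (simp add: sum_distrib_right)
    also have "\<dots> = (\<Sum>j\<in>UNIV. (\<Sum>k\<in>UNIV. a j k) * (u $ j)^2)"
      using wb unfolding weight_balanced_def by simp
    finally show ?thesis .
  qed
  have C: "(\<Sum>i\<in>UNIV. \<Sum>j\<in>UNIV. a i j * (u $ i - u $ j)^2)
     = (\<Sum>i\<in>UNIV. (\<Sum>k\<in>UNIV. a i k) * (u $ i)^2) - 2 * (\<Sum>i\<in>UNIV. \<Sum>j\<in>UNIV. a i j * u $ i * u $ j)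
       + (\<Sum>i\<in>UNIV. \<Sum>j\<in>UNIV. a i j * (u $ j)^2)"
    by (simp add: power2_diff algebra_simps sum.distrib sum_subtractf sum_distrib_left sum_distrib_right)
  show ?thesis using A B C by (simp add: qf_double_sum)
qed

lemma lap_row_sum: "(\<Sum>j\<in>UNIV. laplacian a $ i $ j) = 0"
proof -
  have "(\<Sum>j\<in>UNIV. laplacian a $ i $ j) = (\<Sum>j\<in>UNIV. (if i = j then (\<Sum>k\<in>UNIV. a i k) else 0)) - (\<Sum>j\<in>UNIV. a i j)"
    by (simp add: lap_entry sum_subtractf)
  also have "\<dots> = 0" by (simp add: sum.delta cong: if_cong)
  finally show ?thesis .
qed

lemma lap_col_sum:
  assumes wb: "weight_balanced a"
  shows "(\<Sum>i\<in>UNIV. laplacian a $ i $ j) = 0"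
proof -
  have "(\<Sum>i\<in>UNIV. laplacian a $ i $ j) = (\<Sum>i\<in>UNIV. (if i = j then (\<Sum>k\<in>UNIV. a i k) else 0)) - (\<Sum>i\<in>UNIV. a i j)"
    by (simp add: lap_entry sum_subtractf)
  also have "\<dots> = (\<Sum>k\<in>UNIV. a j k) - (\<Sum>i\<in>UNIV. a i j)"
    by (simp add: sum.delta' cong: if_cong)
  also have "\<dots> = 0" using wb unfolding weight_balanced_def by simp
  finally show ?thesis .
qed

lemma Lh_one:
  assumes wb: "weight_balanced a"
  shows "sym_part (laplacian a) *v one_vec = 0"
proof -
  have "(sym_part (laplacian a) *v one_vec) $ i = 0" for i
  proof -
    have "(sym_part (laplacian a) *v one_vec) $ i
        = ((\<Sum>j\<in>UNIV. laplacian a $ i $ j) + (\<Sum>j\<in>UNIV. laplacian a $ j $ i)) / 2"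
      by (simp add: mv_entry sym_entry one_vec_def sum.distrib sum_divide_distrib add_divide_distrib)
    then show ?thesis using lap_row_sum[of a i] lap_col_sum[OF wb, of i] by simp
  qed
  then show ?thesis by (simp add: vec_eq_iff)
qed

lemma qf_nonneg:
  assumes wb: "weight_balanced a" and nn: "\<And>i j. a i j \<ge> 0"
  shows "qf a u \<ge> 0"
  unfolding qf_edges[OF wb] using nn by (intro divide_nonneg_pos sum_nonneg mult_nonneg_nonneg) auto

lemma qf_zero_edges:
  assumes wb: "weight_balanced a" and nn: "\<And>i j. a i j \<ge> 0" and q0: "qf a u = 0" and aij: "a i j > 0"
  shows "u $ i = u $ j"
proof -
  have "(\<Sum>i\<in>UNIV. \<Sum>j\<in>UNIV. a i j * (u $ i - u $ j)^2) = 0" using q0 by (simp add: qf_edges[OF wb])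
  then have "\<forall>i. (\<Sum>j\<in>UNIV. a i j * (u $ i - u $ j)^2) = 0"
    using nn by (subst (asm) sum_nonneg_eq_0_iff) (auto intro!: sum_nonneg)
  then have "a i j * (u $ i - u $ j)^2 = 0"
    using nn by (subst (asm) sum_nonneg_eq_0_iff) auto
  then show ?thesis using aij by simp
qed

lemma qf_zero_consensus:
  assumes wb: "weight_balanced a" and nn: "\<And>i j. a i j \<ge> 0" and sc: "strongly_connected a"
    and q0: "qf a u = 0"
  shows "u $ i = u $ j"
proof -
  have "(j, i) \<in> {(x, y). a y x > 0}\<^sup>*" using sc unfolding strongly_connected_def by blast
  then have "u $ j = u $ i"
  proof (induction rule: rtrancl_induct)
    case base then show ?case by simp
  next
    case (step y z)
    then have "a z y > 0" by simp
    then have "u $ z = u $ y" by (rule qf_zero_edges[OF wb nn q0])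
    then show ?case using step.IH by simp
  qed
  then show ?thesis by simp
qed

lemma qf_expand:
  "qf a (u + t *\<^sub>R w) = qf a u + 2 * t * (w \<bullet> (sym_part (laplacian a) *v u)) + t^2 * qf a w"
proof -
  have s: "(sym_part (laplacian a) *v u) \<bullet> w = u \<bullet> (sym_part (laplacian a) *v w)" for u w
    by (rule sym_inner) (rule sym_part_sym)
  show ?thesis
    unfolding qf_def using s[of w u]
    by (simp add: matrix_vector_right_distrib matrix_vector_mult_scaleR inner_add_left inner_add_right
        power2_eq_square inner_commute algebra_simps)
qed

lemma qf_scale: "qf a (c *\<^sub>R u) = c^2 * qf a u"
  unfolding qf_def by (simp add: matrix_vector_mult_scaleR power2_eq_square)

lemma quad_zero:
  fixes A B :: real
  assumes "\<And>t. 2 * t * B + t^2 * A \<ge> 0"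
  shows "B = 0"
proof (rule ccontr)
  assume Bn: "B \<noteq> 0"
  define s where "s = \<bar>A\<bar> + 1"
  have s1: "s \<ge> 1" unfolding s_def by simp
  define t where "t = - B / s"
  have "2 * t * B = - 2 * B^2 / s" by (simp add: t_def power2_eq_square)
  moreover have "t^2 * A \<le> B^2 / s"
  proof -
    have "t^2 * A \<le> t^2 * \<bar>A\<bar>" by (intro mult_left_mono) simp_all
    also have "\<dots> \<le> t^2 * s" unfolding s_def by (intro mult_left_mono) simp_all
    also have "\<dots> = B^2 / s" using s1 by (simp add: t_def power2_eq_square field_simps)
    finally show ?thesis .
  qed
  moreover have "B^2 / s > 0" using Bn s1 by simp
  ultimately have "2 * t * B + t^2 * A < 0" by (simp add: field_simps)
  with assms[of t] show False by simp
qed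

lemma sum_eq_inner_one: "(\<Sum>i\<in>UNIV. u $ i) = u \<bullet> (one_vec :: real^'n)"
  by (simp add: inner_real_vec one_vec_def)

lemma Lh_sym_inner: "(sym_part (laplacian a) *v u) \<bullet> w = u \<bullet> (sym_part (laplacian a) *v w)"
  by (rule sym_inner) (rule sym_part_sym)

lemma two_distinct:
  assumes "CARD('n::finite) \<ge> 2"
  obtains i j :: "'n::finite" where "i \<noteq> j"
proof -
  have "\<exists>i j :: 'n. i \<noteq> j"
  proof (rule ccontr)
    assume "\<not> ?thesis"
    then have "card (UNIV :: 'n set) \<le> Suc 0" by (subst card_le_Suc0_iff_eq) auto
    with assms show False by simp
  qed
  then show ?thesis using that by blast
qed

lemma spectral_core:
  fixes a :: "'n::finite \<Rightarrow> 'n \<Rightarrow> real"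
  assumes wb: "weight_balanced a" and nn: "\<And>i j. a i j \<ge> 0" and sc: "strongly_connected a"
    and n2: "CARD('n) \<ge> 2"
  obtains c0 v0 where "c0 > 0" "v0 \<noteq> 0" "sym_part (laplacian a) *v v0 = c0 *\<^sub>R v0"
    "\<And>u. (\<Sum>i\<in>UNIV. u $ i) = 0 \<Longrightarrow> qf a u \<ge> c0 * (norm u)^2"
proof -
  define Lh where "Lh = sym_part (laplacian a)"
  define Sph where "Sph = {u::real^'n. u \<bullet> one_vec = 0} \<inter> sphere 0 1"
  have cmp: "compact Sph"
  proof -
    have "closed {u::real^'n. u \<bullet> one_vec = 0}"
      by (rule closed_Collect_eq) (auto intro!: continuous_intros)
    then show ?thesis unfolding Sph_def by (intro closed_Int_compact) auto
  qed
  obtain i j :: 'n where ij: "i \<noteq> j" using two_distinct[OF n2] by blast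
  define u1 where "u1 = axis i (1::real) - axis j 1"
  have u1s: "u1 \<bullet> one_vec = 0"
    by (simp add: u1_def inner_real_vec one_vec_def axis_def sum_subtractf)
  have u1n: "u1 \<noteq> 0"
  proof
    assume "u1 = 0"
    then have "u1 $ i = 0" by simp
    then show False using ij by (simp add: u1_def axis_def)
  qed
  have ne: "Sph \<noteq> {}"
  proof -
    have "(1 / norm u1) *\<^sub>R u1 \<in> Sph" using u1s u1n by (simp add: Sph_def)
    then show ?thesis by blast
  qed
  have bl: "bounded_linear (\<lambda>u. Lh *v u)"
    using matrix_vector_mul_linear linear_conv_bounded_linear by blast
  have cont: "continuous_on Sph (qf a)"
    unfolding qf_def Lh_def[symmetric]
    by (intro continuous_intros linear_continuous_on[OF bl])
  obtain v0 where v0S: "v0 \<in> Sph" and v0min: "\<And>y. y \<in> Sph \<Longrightarrow> qf a v0 \<le> qf a y"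
    using continuous_attains_inf[OF cmp ne cont] by blast
  define c0 where "c0 = qf a v0"
  have v0n: "norm v0 = 1" and v0s: "v0 \<bullet> one_vec = 0" using v0S by (auto simp: Sph_def)
  have v0nz: "v0 \<noteq> 0" using v0n by auto
  have c0pos: "c0 > 0"
  proof -
    have "c0 \<ge> 0" unfolding c0_def by (rule qf_nonneg[OF wb nn])
    moreover have "c0 \<noteq> 0"
    proof
      assume "c0 = 0"
      then have eq: "\<And>k l. v0 $ k = v0 $ l" using qf_zero_consensus[OF wb nn sc] by (simp add: c0_def)
      have "0 = (\<Sum>k\<in>UNIV. v0 $ k)" using v0s by (simp add: sum_eq_inner_one)
      also have "\<dots> = (\<Sum>k\<in>(UNIV::'n set). v0 $ i)" by (rule sum.cong) (auto intro: eq)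
      also have "\<dots> = real CARD('n) * v0 $ i" by simp
      finally have "v0 $ i = 0" using n2 by simp
      then have "v0 = 0" unfolding vec_eq_iff using eq by (metis zero_index)
      then show False using v0nz by simp
    qed
    ultimately show ?thesis by simp
  qed
  have bound: "qf a u \<ge> c0 * (norm u)^2" if us: "u \<bullet> one_vec = 0" for u
  proof (cases "u = 0")
    case True then show ?thesis by (simp add: qf_def)
  next
    case False
    then have "(1 / norm u) *\<^sub>R u \<in> Sph" using us by (simp add: Sph_def)
    then have "c0 \<le> qf a ((1 / norm u) *\<^sub>R u)" unfolding c0_def by (rule v0min)
    also have "\<dots> = qf a u / (norm u)^2" by (simp add: qf_scale power2_eq_square)
    finally show ?thesis using False by (simp add: field_simps)
  qed
  have eig: "Lh *v v0 = c0 *\<^sub>R v0"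
  proof -
    define w where "w = Lh *v v0 - c0 *\<^sub>R v0"
    have ws: "w \<bullet> one_vec = 0"
    proof -
      have "(Lh *v v0) \<bullet> one_vec = v0 \<bullet> (Lh *v one_vec)" unfolding Lh_def by (rule Lh_sym_inner)
      also have "\<dots> = 0" unfolding Lh_def Lh_one[OF wb] by simp
      finally show ?thesis using v0s by (simp add: w_def inner_diff_left)
    qed
    have "2 * t * (w \<bullet> (Lh *v v0) - c0 * (v0 \<bullet> w)) + t^2 * (qf a w - c0 * (norm w)^2) \<ge> 0" for t
    proof -
      have "(v0 + t *\<^sub>R w) \<bullet> one_vec = 0" using v0s ws by (simp add: inner_add_left)
      then have "qf a (v0 + t *\<^sub>R w) \<ge> c0 * (norm (v0 + t *\<^sub>R w))^2" by (rule bound)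
      moreover have "(norm (v0 + t *\<^sub>R w))^2 = 1 + 2 * t * (v0 \<bullet> w) + t^2 * (norm w)^2"
      proof -
        have vv: "v0 \<bullet> v0 = 1" using v0n by (metis power2_norm_eq_inner one_power2)
        show ?thesis unfolding power2_norm_eq_inner using vv
          by (simp add: inner_add_left inner_add_right inner_commute power2_eq_square algebra_simps)
      qed
      moreover have "qf a (v0 + t *\<^sub>R w) = c0 + 2 * t * (w \<bullet> (Lh *v v0)) + t^2 * qf a w"
        unfolding qf_expand c0_def Lh_def ..
      ultimately show ?thesis by (simp add: algebra_simps)
    qed
    then have "w \<bullet> (Lh *v v0) - c0 * (v0 \<bullet> w) = 0" by (rule quad_zero)
    then have "w \<bullet> w = 0" by (simp add: w_def inner_diff_right inner_commute algebra_simps)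
    then show ?thesis by (simp add: w_def)
  qed
  show ?thesis
  proof (rule that[OF c0pos v0nz eig[unfolded Lh_def]])
    fix u :: "real^'n" assume "(\<Sum>i\<in>UNIV. u $ i) = 0"
    then show "qf a u \<ge> c0 * (norm u)^2" by (intro bound) (simp add: sum_eq_inner_one)
  qed
qed

lemma eta2_props:
  fixes a :: "'n::finite \<Rightarrow> 'n \<Rightarrow> real"
  assumes wb: "weight_balanced a" and nn: "\<And>i j. a i j \<ge> 0" and sc: "strongly_connected a"
    and n2: "CARD('n) \<ge> 2"
  shows "eta2 (sym_part (laplacian a)) > 0"
    and "\<And>u. (\<Sum>i\<in>UNIV. u $ i) = 0 \<Longrightarrow> qf a u \<ge> eta2 (sym_part (laplacian a)) * (norm u)^2"
proof -
  obtain c0 v0 where c0pos: "c0 > 0" and v0nz: "v0 \<noteq> 0"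
    and eigv0: "sym_part (laplacian a) *v v0 = c0 *\<^sub>R v0"
    and bnd: "\<And>u. (\<Sum>i\<in>UNIV. u $ i) = 0 \<Longrightarrow> qf a u \<ge> c0 * (norm u)^2"
    using spectral_core[OF wb nn sc n2] by blast
  define Lh where "Lh = sym_part (laplacian a)"
  define E where "E = {c. is_eig Lh c}"
  define ev where "ev c = (SOME v. v \<noteq> 0 \<and> Lh *v v = c *\<^sub>R v)" for c
  have evP: "ev c \<noteq> 0 \<and> Lh *v ev c = c *\<^sub>R ev c" if "c \<in> E" for c
  proof -
    have "\<exists>v. v \<noteq> 0 \<and> Lh *v v = c *\<^sub>R v" using that by (simp add: E_def is_eig_def)
    then show ?thesis unfolding ev_def by (rule someI_ex)
  qed
  have inj: "inj_on ev E"
  proof (rule inj_onI)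
    fix c d assume c: "c \<in> E" and d: "d \<in> E" and e: "ev c = ev d"
    have hc: "Lh *v ev c = c *\<^sub>R ev c" using evP[OF c] by blast
    have hd: "Lh *v ev d = d *\<^sub>R ev d" using evP[OF d] by blast
    have "c *\<^sub>R ev c = Lh *v ev c" using hc by simp
    also have "\<dots> = Lh *v ev d" using e by simp
    also have "\<dots> = d *\<^sub>R ev d" by (rule hd)
    also have "\<dots> = d *\<^sub>R ev c" using e by simp
    finally have "(c - d) *\<^sub>R ev c = 0" by (simp add: algebra_simps)
    then show "c = d" using evP[OF c] by simp
  qed
  have orth: "ev c \<bullet> ev d = 0" if c: "c \<in> E" and d: "d \<in> E" and cd: "c \<noteq> d" for c d
  proof -
    have "c * (ev c \<bullet> ev d) = (Lh *v ev c) \<bullet> ev d" using evP[OF c] by simp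
    also have "\<dots> = ev c \<bullet> (Lh *v ev d)" unfolding Lh_def by (rule Lh_sym_inner)
    also have "\<dots> = d * (ev c \<bullet> ev d)" using evP[OF d] by simp
    finally have "(c - d) * (ev c \<bullet> ev d) = 0" by (simp add: algebra_simps)
    then show ?thesis using cd by simp
  qed
  have finE: "finite E"
  proof -
    have "pairwise orthogonal (ev ` E)"
      unfolding pairwise_def orthogonal_def
    proof (intro ballI impI)
      fix x y assume x: "x \<in> ev ` E" and y: "y \<in> ev ` E" and xy: "x \<noteq> y"
      obtain c where c: "c \<in> E" "x = ev c" using x by blast
      obtain d where d: "d \<in> E" "y = ev d" using y by blast
      have "c \<noteq> d" using xy c d by blast
      then show "x \<bullet> y = 0" using orth[OF c(1) d(1)] c d by simp
    qed
    moreover have "0 \<notin> ev ` E" using evP by auto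
    ultimately have "independent (ev ` E)" by (rule pairwise_orthogonal_independent)
    then have "finite (ev ` E)" using independent_bound by blast
    then show ?thesis using inj by (rule finite_imageD)
  qed
  have eig_nonneg: "c \<ge> 0" if c: "c \<in> E" for c
  proof -
    have "0 \<le> qf a (ev c)" by (rule qf_nonneg[OF wb nn])
    also have "qf a (ev c) = c * (ev c \<bullet> ev c)" using evP[OF c] by (simp add: qf_def Lh_def)
    finally have "0 \<le> c * (ev c \<bullet> ev c)" .
    moreover have "ev c \<bullet> ev c > 0" using evP[OF c] by simp
    ultimately show ?thesis by (simp add: zero_le_mult_iff)
  qed
  have mult_ge1: "eig_mult Lh c \<ge> 1" if c: "c \<in> E" for c
  proof -
    have "card {ev c} \<le> dim {v. Lh *v v = c *\<^sub>R v}"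
    proof (rule independent_card_le_dim)
      show "{ev c} \<subseteq> {v. Lh *v v = c *\<^sub>R v}" using evP[OF c] by simp
      show "independent {ev c}"
        by (rule pairwise_orthogonal_independent) (use evP[OF c] in auto)
    qed
    then show ?thesis by (simp add: eig_mult_def)
  qed
  have one_nz: "one_vec \<noteq> (0::real^'n)"
  proof
    assume "one_vec = (0::real^'n)"
    then have "(one_vec::real^'n) $ undefined = 0" by simp
    then show False by (simp add: one_vec_def)
  qed
  have zeroE: "0 \<in> E"
    unfolding E_def is_eig_def Lh_def using one_nz Lh_one[OF wb] by auto
  have c0E: "c0 \<in> E" unfolding E_def is_eig_def Lh_def using v0nz eigv0 by auto
  have mult0: "eig_mult Lh 0 \<le> 1"
  proof -
    have "{v. Lh *v v = 0 *\<^sub>R v} \<subseteq> span {one_vec}"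
    proof
      fix v assume "v \<in> {v. Lh *v v = 0 *\<^sub>R v}"
      then have "qf a v = 0" by (simp add: qf_def Lh_def)
      then have eq: "\<And>i j. v $ i = v $ j" using qf_zero_consensus[OF wb nn sc] by blast
      have "v = (v $ undefined) *\<^sub>R one_vec" unfolding vec_eq_iff one_vec_def by (auto intro: eq)
      also have "\<dots> \<in> span {one_vec}" by (intro span_mul span_base) simp
      finally show "v \<in> span {one_vec}" .
    qed
    then have "dim {v. Lh *v v = 0 *\<^sub>R v} \<le> card {one_vec::real^'n}" by (rule dim_le_card) simp
    then show ?thesis by (simp add: eig_mult_def)
  qed
  define S where "S = {c. is_eig Lh c \<and> 2 \<le> (\<Sum>d\<in>{d. is_eig Lh d \<and> d \<le> c}. eig_mult Lh d)}"
  have SE: "S \<subseteq> E" unfolding S_def E_def by auto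
  have finS: "finite S" using finite_subset[OF SE finE] .
  have c0S: "c0 \<in> S"
  proof -
    define D where "D = {d. is_eig Lh d \<and> d \<le> c0}"
    have finD: "finite D" using finE by (rule finite_subset[rotated]) (auto simp: D_def E_def)
    have sub: "{0, c0} \<subseteq> D" using zeroE c0E c0pos by (auto simp: D_def E_def)
    have "(\<Sum>d\<in>{0, c0}. eig_mult Lh d) \<le> (\<Sum>d\<in>D. eig_mult Lh d)"
      by (rule sum_mono2[OF finD sub]) simp
    moreover have "(\<Sum>d\<in>{0, c0}. eig_mult Lh d) = eig_mult Lh 0 + eig_mult Lh c0"
      using c0pos by simp
    moreover have "eig_mult Lh 0 \<ge> 1" "eig_mult Lh c0 \<ge> 1" using mult_ge1 zeroE c0E by auto
    ultimately have "2 \<le> (\<Sum>d\<in>D. eig_mult Lh d)" by linarith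
    then show ?thesis using c0E by (simp add: S_def D_def E_def)
  qed
  have Spos: "c > 0" if c: "c \<in> S" for c
  proof (rule ccontr)
    assume "\<not> c > 0"
    moreover have "c \<ge> 0" using c SE eig_nonneg by auto
    ultimately have c0': "c = 0" by simp
    have "{d. is_eig Lh d \<and> d \<le> c} = {0}"
    proof (intro equalityI subsetI)
      fix d assume "d \<in> {d. is_eig Lh d \<and> d \<le> c}"
      then have "d \<in> E" "d \<le> 0" using c0' by (auto simp: E_def)
      then show "d \<in> {0}" using eig_nonneg by force
    next
      fix d assume "d \<in> {0::real}"
      then show "d \<in> {d. is_eig Lh d \<and> d \<le> c}" using zeroE c0' by (simp add: E_def)
    qed
    then have "(\<Sum>d\<in>{d. is_eig Lh d \<and> d \<le> c}. eig_mult Lh d) \<le> 1" using mult0 by simp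
    moreover have "2 \<le> (\<Sum>d\<in>{d. is_eig Lh d \<and> d \<le> c}. eig_mult Lh d)" using c by (simp add: S_def)
    ultimately show False by simp
  qed
  have eta: "eta2 Lh = Min S"
    unfolding eta2_def kth_eig_def S_def[symmetric] using finS c0S by (intro cInf_eq_Min) auto
  have etaS: "eta2 Lh \<in> S" unfolding eta using finS c0S by (intro Min_in) auto
  have etale: "eta2 Lh \<le> c0" unfolding eta using finS c0S by (intro Min_le) auto
  show "eta2 (sym_part (laplacian a)) > 0" using Spos[OF etaS] by (simp add: Lh_def)
  fix u :: "real^'n" assume u: "(\<Sum>i\<in>UNIV. u $ i) = 0"
  have "eta2 Lh * (norm u)^2 \<le> c0 * (norm u)^2" using etale by (intro mult_right_mono) simp_all
  also have "\<dots> \<le> qf a u" by (rule bnd[OF u])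
  finally show "qf a u \<ge> eta2 (sym_part (laplacian a)) * (norm u)^2" by (simp add: Lh_def)
qed

definition prj :: "real^'p^'n::finite \<Rightarrow> real^'p^'n" where
  "prj v = v - (\<chi> i. (1 / real CARD('n)) *\<^sub>R (\<Sum>j\<in>UNIV. v $ j))"

definition colv :: "real^'p^'n::finite \<Rightarrow> 'p \<Rightarrow> real^'n" where
  "colv v k = (\<chi> i. v $ i $ k)"

lemma lap_apply_nth: "lap_apply M v $ i = (\<Sum>j\<in>UNIV. (M $ i $ j) *\<^sub>R (v $ j))"
  by (simp add: lap_apply_def)

lemma lap_sum0:
  assumes wb: "weight_balanced a"
  shows "(\<Sum>i\<in>UNIV. lap_apply (laplacian a) v $ i) = 0"
proof -
  have "(\<Sum>i\<in>UNIV. lap_apply (laplacian a) v $ i) = (\<Sum>j\<in>UNIV. (\<Sum>i\<in>UNIV. laplacian a $ i $ j) *\<^sub>R v $ j)"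
    by (simp add: lap_apply_nth scaleR_sum_left) (rule sum.swap)
  also have "\<dots> = 0" by (simp add: lap_col_sum[OF wb])
  finally show ?thesis .
qed

lemma lap_const: "lap_apply (laplacian a) (\<chi> i. c) = 0"
  by (simp add: vec_eq_iff lap_apply_nth scaleR_sum_left[symmetric] lap_row_sum)

lemma lap_linear: "linear (lap_apply (M::real^'n^'n) :: real^'p^'n \<Rightarrow> real^'p^'n)"
  by (rule linearI) (simp_all add: vec_eq_iff lap_apply_nth scaleR_add_right sum.distrib scaleR_sum_right ac_simps)

lemma lap_bl: "bounded_linear (lap_apply (M::real^'n^'n) :: real^'p^'n \<Rightarrow> real^'p^'n)"
  using lap_linear linear_conv_bounded_linear by blast

lemma lap_diff: "lap_apply M (u - w) = lap_apply M u - lap_apply M (w::real^'p^'n::finite)"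
  by (rule linear_diff[OF lap_linear])

lemma card_pos_real: "real CARD('n::finite) > 0" by simp

lemma prj_nth: "prj v $ i = v $ i - (1 / real CARD('n)) *\<^sub>R (\<Sum>j\<in>UNIV. v $ j)"
  for v :: "real^'p^'n::finite"
  by (simp add: prj_def)

lemma sum_prj: "(\<Sum>i\<in>UNIV. prj v $ i) = 0" for v :: "real^'p^'n::finite"
proof -
  have "(\<Sum>i\<in>UNIV. prj v $ i) = (\<Sum>i\<in>UNIV. v $ i) - (\<Sum>i\<in>(UNIV::'n set). (1 / real CARD('n)) *\<^sub>R (\<Sum>j\<in>UNIV. v $ j))"
    by (simp add: prj_nth sum_subtractf)
  also have "(\<Sum>i\<in>(UNIV::'n set). (1 / real CARD('n)) *\<^sub>R (\<Sum>j\<in>UNIV. v $ j))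
      = real CARD('n) *\<^sub>R ((1 / real CARD('n)) *\<^sub>R (\<Sum>j\<in>UNIV. v $ j))"
    by (rule sum_constant_scaleR)
  also have "real CARD('n) *\<^sub>R ((1 / real CARD('n)) *\<^sub>R (\<Sum>j\<in>UNIV. v $ j)) = (\<Sum>j\<in>UNIV. v $ j)"
    using card_pos_real[where 'n='n] by simp
  finally show ?thesis by simp
qed

lemma prj_fix: "(\<Sum>i\<in>UNIV. v $ i) = 0 \<Longrightarrow> prj v = v" for v :: "real^'p^'n::finite"
  by (simp add: prj_def vec_eq_iff)

lemma prj_id: "prj (prj v) = prj v" for v :: "real^'p^'n::finite"
  by (rule prj_fix[OF sum_prj])

lemma inner_stack: "(u::real^'p^'n::finite) \<bullet> w = (\<Sum>i\<in>UNIV. u $ i \<bullet> w $ i)"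
  by (simp add: inner_vec_def)

lemma prj_inner: "prj v \<bullet> w = v \<bullet> w - (1 / real CARD('n)) * ((\<Sum>j\<in>UNIV. v $ j) \<bullet> (\<Sum>j\<in>UNIV. w $ j))"
  for v w :: "real^'p^'n::finite"
proof -
  define S where "S = (\<Sum>j\<in>UNIV. v $ j)"
  define c where "c = 1 / real CARD('n)"
  have "prj v \<bullet> w = (\<Sum>i\<in>UNIV. v $ i \<bullet> w $ i) - (\<Sum>i\<in>UNIV. c * (S \<bullet> w $ i))"
    by (simp add: inner_stack prj_nth inner_diff_left sum_subtractf S_def[symmetric] c_def[symmetric])
  also have "\<dots> = v \<bullet> w - c * (S \<bullet> (\<Sum>j\<in>UNIV. w $ j))"
    by (simp add: inner_stack inner_sum_right sum_distrib_left)
  finally show ?thesis by (simp add: S_def c_def)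
qed

lemma prj_sa: "prj v \<bullet> w = v \<bullet> prj w" for v w :: "real^'p^'n::finite"
proof -
  have "v \<bullet> prj w = prj w \<bullet> v" by (rule inner_commute)
  also have "\<dots> = w \<bullet> v - (1 / real CARD('n)) * ((\<Sum>j\<in>UNIV. w $ j) \<bullet> (\<Sum>j\<in>UNIV. v $ j))"
    by (rule prj_inner)
  also have "\<dots> = v \<bullet> w - (1 / real CARD('n)) * ((\<Sum>j\<in>UNIV. v $ j) \<bullet> (\<Sum>j\<in>UNIV. w $ j))"
    by (simp add: inner_commute)
  also have "\<dots> = prj v \<bullet> w" by (rule prj_inner[symmetric])
  finally show ?thesis by simp
qed

lemma prj_linear: "linear (prj :: real^'p^'n::finite \<Rightarrow> _)"
  by (rule linearI) (simp_all add: prj_def vec_eq_iff sum.distrib scaleR_add_right algebra_simps scaleR_sum_right)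

lemma prj_bl: "bounded_linear (prj :: real^'p^'n::finite \<Rightarrow> _)"
  using prj_linear linear_conv_bounded_linear by blast

lemma norm2_cols: "(norm v)^2 = (\<Sum>k\<in>UNIV. (norm (colv v k))^2)" for v :: "real^'p^'n::finite"
proof -
  have "(norm v)^2 = (\<Sum>i\<in>UNIV. \<Sum>k\<in>UNIV. v $ i $ k * v $ i $ k)"
    by (simp add: power2_norm_eq_inner inner_stack inner_real_vec)
  also have "\<dots> = (\<Sum>k\<in>UNIV. \<Sum>i\<in>UNIV. v $ i $ k * v $ i $ k)" by (rule sum.swap)
  also have "\<dots> = (\<Sum>k\<in>UNIV. (norm (colv v k))^2)"
    by (simp add: power2_norm_eq_inner inner_real_vec colv_def)
  finally show ?thesis .
qed

lemma lap_quad_cols: "v \<bullet> lap_apply (laplacian a) v = (\<Sum>k\<in>UNIV. qf a (colv v k))"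
  for v :: "real^'p^'n::finite"
proof -
  have "v \<bullet> lap_apply (laplacian a) v = (\<Sum>i\<in>UNIV. \<Sum>j\<in>UNIV. \<Sum>k\<in>UNIV. laplacian a $ i $ j * v $ i $ k * v $ j $ k)"
  proof -
    have "v \<bullet> lap_apply (laplacian a) v = (\<Sum>i\<in>UNIV. \<Sum>j\<in>UNIV. laplacian a $ i $ j * (v $ i \<bullet> v $ j))"
      by (simp add: inner_stack lap_apply_nth inner_sum_right)
    also have "\<dots> = (\<Sum>i\<in>UNIV. \<Sum>j\<in>UNIV. \<Sum>k\<in>UNIV. laplacian a $ i $ j * v $ i $ k * v $ j $ k)"
      by (simp add: inner_real_vec sum_distrib_left mult.assoc)
    finally show ?thesis .
  qed
  also have "\<dots> = (\<Sum>i\<in>UNIV. \<Sum>k\<in>UNIV. \<Sum>j\<in>UNIV. laplacian a $ i $ j * v $ i $ k * v $ j $ k)"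
    by (intro sum.cong refl sum.swap)
  also have "\<dots> = (\<Sum>k\<in>UNIV. \<Sum>i\<in>UNIV. \<Sum>j\<in>UNIV. laplacian a $ i $ j * v $ i $ k * v $ j $ k)"
    by (rule sum.swap)
  also have "\<dots> = (\<Sum>k\<in>UNIV. qf a (colv v k))"
    by (simp add: qf_double_sum colv_def)
  finally show ?thesis .
qed

lemma qf_shift:
  assumes wb: "weight_balanced a"
  shows "qf a (u + m *\<^sub>R one_vec) = qf a u"
proof -
  have "one_vec \<bullet> (sym_part (laplacian a) *v u) = (sym_part (laplacian a) *v one_vec) \<bullet> u"
    by (simp add: Lh_sym_inner)
  also have "\<dots> = 0" by (simp add: Lh_one[OF wb])
  finally have a: "one_vec \<bullet> (sym_part (laplacian a) *v u) = 0" .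
  have b: "qf a one_vec = 0" by (simp add: qf_def Lh_one[OF wb])
  show ?thesis using qf_expand[of a u m one_vec] a b by simp
qed

lemma lap_quad_bound:
  fixes v :: "real^'p^'n::finite"
  assumes wb: "weight_balanced a" and nn: "\<And>i j. a i j \<ge> 0" and sc: "strongly_connected a"
    and n2: "CARD('n) \<ge> 2"
  shows "v \<bullet> lap_apply (laplacian a) v \<ge> eta2 (sym_part (laplacian a)) * (norm (prj v))^2"
proof -
  have col: "colv v k = colv (prj v) k + ((1 / real CARD('n)) * (\<Sum>j\<in>UNIV. v $ j $ k)) *\<^sub>R one_vec" for k
    by (simp add: colv_def prj_nth vec_eq_iff one_vec_def)
  have "eta2 (sym_part (laplacian a)) * (norm (prj v))^2
      = (\<Sum>k\<in>UNIV. eta2 (sym_part (laplacian a)) * (norm (colv (prj v) k))^2)"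
    by (simp add: norm2_cols sum_distrib_left)
  also have "\<dots> \<le> (\<Sum>k\<in>UNIV. qf a (colv (prj v) k))"
  proof (rule sum_mono)
    fix k
    have "(\<Sum>i\<in>UNIV. colv (prj v) k $ i) = (\<Sum>i\<in>UNIV. prj v $ i) $ k"
      by (simp add: colv_def sum_component)
    also have "\<dots> = 0" by (simp add: sum_prj)
    finally show "eta2 (sym_part (laplacian a)) * (norm (colv (prj v) k))^2 \<le> qf a (colv (prj v) k)"
      by (rule eta2_props(2)[OF wb nn sc n2])
  qed
  also have "\<dots> = (\<Sum>k\<in>UNIV. qf a (colv v k))"
    by (intro sum.cong refl) (simp add: col qf_shift[OF wb])
  also have "\<dots> = v \<bullet> lap_apply (laplacian a) v" by (simp add: lap_quad_cols)
  finally show ?thesis .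
qed

lemma dir_deriv:
  fixes f :: "'a::real_inner \<Rightarrow> real"
  assumes d: "(f has_derivative (\<lambda>h. g \<bullet> h)) (at x)"
  shows "((\<lambda>t. f (x + t *\<^sub>R dd)) has_real_derivative (g \<bullet> dd)) (at 0)"
proof -
  have "((\<lambda>t. x + t *\<^sub>R dd) has_derivative (\<lambda>t. t *\<^sub>R dd)) (at 0)"
    by (auto intro!: derivative_eq_intros)
  from has_derivative_compose[OF this, of f "\<lambda>h. g \<bullet> h"] d
  have "((\<lambda>t. f (x + t *\<^sub>R dd)) has_derivative (\<lambda>t. g \<bullet> (t *\<^sub>R dd))) (at 0)" unfolding o_def by simp
  then show ?thesis by (simp add: has_field_derivative_def mult.commute[of _ "g \<bullet> dd"])
qed

lemma kkt:
  fixes f :: "'n::finite \<Rightarrow> real^'p \<Rightarrow> real" and gf :: "'n \<Rightarrow> real^'p \<Rightarrow> real^'p"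
  assumes grad: "\<And>i u. (f i has_derivative (\<lambda>h. gf i u \<bullet> h)) (at u)"
    and opt: "optimalP f b xs"
  shows "gf i (xs $ i) = gf j (xs $ j)"
proof (cases "i = j")
  case True then show ?thesis by simp
next
  case False
  define v where "v = gf i (xs $ i) - gf j (xs $ j)"
  define d :: "real^'p^'n" where "d = (\<chi> k. (if k = i then v else 0) - (if k = j then v else 0))"
  define h where "h t = (\<Sum>k\<in>UNIV. f k (xs $ k + t *\<^sub>R d $ k))" for t
  have sd: "(\<Sum>k\<in>UNIV. d $ k) = 0" by (simp add: d_def sum_subtractf)
  have min: "h 0 \<le> h t" for t
  proof -
    have "feasibleP b (xs + t *\<^sub>R d)"
      using opt sd by (simp add: optimalP_def feasibleP_def sum.distrib scaleR_sum_right[symmetric])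
    then have "(\<Sum>k\<in>UNIV. f k (xs $ k)) \<le> (\<Sum>k\<in>UNIV. f k ((xs + t *\<^sub>R d) $ k))"
      using opt unfolding optimalP_def by blast
    then show ?thesis by (simp add: h_def)
  qed
  have "(h has_real_derivative (\<Sum>k\<in>UNIV. gf k (xs $ k) \<bullet> d $ k)) (at 0)"
    unfolding h_def by (intro DERIV_sum dir_deriv grad)
  then have "(\<Sum>k\<in>UNIV. gf k (xs $ k) \<bullet> d $ k) = 0"
    using DERIV_local_min[OF _ zero_less_one] min by blast
  moreover have "(\<Sum>k\<in>UNIV. gf k (xs $ k) \<bullet> d $ k) = gf i (xs $ i) \<bullet> v - gf j (xs $ j) \<bullet> v"
    by (simp add: d_def inner_diff_right sum_subtractf if_distrib[of "\<lambda>x. _ \<bullet> x"] cong: if_cong)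
  ultimately have "v \<bullet> v = 0" by (simp add: v_def inner_diff_left)
  then show ?thesis by (simp add: v_def)
qed

lemma opt_unique:
  fixes f :: "'n::finite \<Rightarrow> real^'p \<Rightarrow> real" and gf :: "'n \<Rightarrow> real^'p \<Rightarrow> real^'p"
  assumes grad: "\<And>i u. (f i has_derivative (\<lambda>h. gf i u \<bullet> h)) (at u)"
    and strong: "\<And>i. mu_i i > 0 \<and> strongly_convex_on (mu_i i) UNIV (f i)"
    and opt: "optimalP f b xs" and opty: "optimalP f b y"
  shows "y = xs"
proof -
  define \<nu> where "\<nu> = gf undefined (xs $ undefined)"
  have g: "gf k (xs $ k) = \<nu>" for k unfolding \<nu>_def by (rule kkt[OF grad opt])
  have le: "(\<Sum>k\<in>UNIV. f k (y $ k)) \<le> (\<Sum>k\<in>UNIV. f k (xs $ k))"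
    using opt opty by (simp add: optimalP_def)
  have ge: "f k (y $ k) \<ge> f k (xs $ k) + \<nu> \<bullet> (y $ k - xs $ k) + mu_i k / 2 * (norm (y $ k - xs $ k))\<^sup>2" for k
    using grad_ineq[OF grad strong[THEN conjunct2]] g by metis
  have "(\<Sum>k\<in>UNIV. \<nu> \<bullet> (y $ k - xs $ k)) = \<nu> \<bullet> ((\<Sum>k\<in>UNIV. y $ k) - (\<Sum>k\<in>UNIV. xs $ k))"
    by (simp add: inner_sum_right sum_subtractf inner_diff_right)
  also have "\<dots> = 0" using opt opty by (simp add: optimalP_def feasibleP_def)
  finally have z: "(\<Sum>k\<in>UNIV. \<nu> \<bullet> (y $ k - xs $ k)) = 0" .
  have "(\<Sum>k\<in>UNIV. f k (xs $ k)) + (\<Sum>k\<in>UNIV. mu_i k / 2 * (norm (y $ k - xs $ k))\<^sup>2)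
      = (\<Sum>k\<in>UNIV. f k (xs $ k) + \<nu> \<bullet> (y $ k - xs $ k) + mu_i k / 2 * (norm (y $ k - xs $ k))\<^sup>2)"
    using z by (simp add: sum.distrib)
  also have "\<dots> \<le> (\<Sum>k\<in>UNIV. f k (y $ k))"
    by (intro sum_mono ge)
  finally have "(\<Sum>k\<in>UNIV. mu_i k / 2 * (norm (y $ k - xs $ k))\<^sup>2) \<le> 0" using le by simp
  moreover have nn: "\<forall>k\<in>UNIV. 0 \<le> mu_i k / 2 * (norm (y $ k - xs $ k))\<^sup>2"
    using strong by (simp add: less_imp_le)
  ultimately have "(\<Sum>k\<in>UNIV. mu_i k / 2 * (norm (y $ k - xs $ k))\<^sup>2) = 0"
    using sum_nonneg[of UNIV] by (meson antisym nn)
  then have "\<forall>k\<in>UNIV. mu_i k / 2 * (norm (y $ k - xs $ k))\<^sup>2 = 0"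
    using nn by (simp add: sum_nonneg_eq_0_iff)
  then have "\<forall>k. y $ k = xs $ k" using strong by (metis UNIV_I divide_eq_0_iff mult_eq_0_iff
      norm_eq_zero power_eq_0_iff right_minus_eq less_numeral_extra(3) zero_neq_numeral)
  then show ?thesis by (simp add: vec_eq_iff)
qed

lemma mono_grad:
  fixes f :: "'a::real_inner \<Rightarrow> real"
  assumes gr: "\<And>u. (f has_derivative (\<lambda>h. g u \<bullet> h)) (at u)"
    and sc: "strongly_convex_on \<mu> UNIV f"
  shows "(g u - g v) \<bullet> (u - v) \<ge> \<mu> * (norm (u - v))\<^sup>2"
proof -
  have 1: "f v \<ge> f u + g u \<bullet> (v - u) + \<mu>/2 * (norm (v - u))\<^sup>2" by (rule grad_ineq[OF gr sc])
  have 2: "f u \<ge> f v + g v \<bullet> (u - v) + \<mu>/2 * (norm (u - v))\<^sup>2" by (rule grad_ineq[OF gr sc])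
  have 3: "norm (v - u) = norm (u - v)" by (rule norm_minus_commute)
  have 4: "g u \<bullet> (v - u) = - (g u \<bullet> (u - v))" by (simp add: inner_diff_right)
  have "(g u - g v) \<bullet> (u - v) = g u \<bullet> (u - v) - g v \<bullet> (u - v)" by (simp add: inner_diff_left)
  then show ?thesis using 1 2 3 4 by simp
qed

lemma mu_le_l:
  fixes f :: "real^'p \<Rightarrow> real"
  assumes gr: "\<And>u. (f has_derivative (\<lambda>h. g u \<bullet> h)) (at u)"
    and sc: "strongly_convex_on \<mu> UNIV f"
    and lip: "\<forall>u v. norm (g u - g v) \<le> L * norm (u - v)"
  shows "\<mu> \<le> L"
proof -
  define w :: "real^'p" where "w = (\<chi> i. 1)"
  have wn: "w \<noteq> 0"
  proof
    assume "w = 0" then have "w $ undefined = 0" by simp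
    then show False by (simp add: w_def)
  qed
  have "\<mu> * (norm (w - 0))\<^sup>2 \<le> (g w - g 0) \<bullet> (w - 0)" by (rule mono_grad[OF gr sc])
  also have "\<dots> \<le> norm (g w - g 0) * norm (w - 0)" by (rule norm_cauchy_schwarz)
  also have "\<dots> \<le> L * norm (w - 0) * norm (w - 0)" using lip[rule_format, of w 0] by (intro mult_right_mono) auto
  finally have "\<mu> * (norm w)\<^sup>2 \<le> L * (norm w)\<^sup>2" by (simp add: power2_eq_square)
  moreover have "(norm w)\<^sup>2 > 0" using wn by simp
  ultimately show ?thesis by simp
qed

lemma norm2_stack: "(norm v)\<^sup>2 = (\<Sum>i\<in>UNIV. (norm (v $ i))\<^sup>2)" for v :: "real^'p^'n::finite"
  by (simp add: power2_norm_eq_inner inner_stack)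

lemma sqrt_exp_half: "sqrt (exp x) = exp (x / 2)"
proof -
  have "exp (x/2) * exp (x/2) = exp x" by (simp flip: exp_add)
  then show ?thesis by (metis real_sqrt_mult_self exp_ge_zero abs_of_nonneg real_sqrt_abs2 power2_eq_square)
qed

theorem theorem4:
  fixes f :: "'n::finite \<Rightarrow> real^'p \<Rightarrow> real"
    and gf :: "'n \<Rightarrow> real^'p \<Rightarrow> real^'p"
    and a :: "'n \<Rightarrow> 'n \<Rightarrow> real"
    and mu_i l_i :: "'n \<Rightarrow> real"
    and b :: "real^'p" and bb :: "real^'p^'n"
    and \<phi> \<alpha> \<beta> :: real
    and x lam z :: "real \<Rightarrow> real^'p^'n"
  assumes grad: "\<And>i u. (f i has_derivative (\<lambda>h. gf i u \<bullet> h)) (at u)"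
    and strong: "\<And>i. mu_i i > 0 \<and> strongly_convex_on (mu_i i) UNIV (f i)"
    and smooth: "\<And>i. l_i i \<ge> 0 \<and> (\<forall>u v. norm (gf i u - gf i v) \<le> l_i i * norm (u - v))"
    and optex: "\<exists>xo. optimalP f b xo"
    and a_nonneg: "\<And>i j. a i j \<ge> 0"
    and sc: "strongly_connected a"
    and wb: "weight_balanced a"
    and phi: "\<phi> > 0"
    and alpha: "\<alpha> \<ge> max (1/2)
        (((\<phi>\<^sup>2 + 3*\<phi> + 3) + (Max (range l_i))\<^sup>2 + 3/2 - Min (range mu_i))
          / ((\<phi> + 1) * Min (range mu_i)))"
    and beta: "\<beta> \<ge> (2 * (\<phi> + 1)\<^sup>2 * \<alpha>\<^sup>2 + 1) / (2 * \<phi> * \<alpha> * eta2 (sym_part (laplacian a)))"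
    and bsum: "(\<Sum>i\<in>UNIV. bb $ i) = b"
    and dx: "\<And>t. t \<ge> 0 \<Longrightarrow> (x has_vector_derivative
        (\<chi> i. - \<alpha> *\<^sub>R (gf i (x t $ i) + lam t $ i) - (x t $ i - bb $ i - z t $ i))) (at t within {0..})"
    and dlam: "\<And>t. t \<ge> 0 \<Longrightarrow> (lam has_vector_derivative
        (x t - bb - z t - \<beta> *\<^sub>R lap_apply (laplacian a) (lam t))) (at t within {0..})"
    and dz: "\<And>t. t \<ge> 0 \<Longrightarrow> (z has_vector_derivative
        ((\<alpha> * \<beta>) *\<^sub>R lap_apply (laplacian a) (lam t))) (at t within {0..})"
    and z0: "(\<Sum>i\<in>UNIV. z 0 $ i) = 0"
  shows "\<exists>xs ls zs. optimalP f b xs \<and> (\<forall>y. optimalP f b y \<longrightarrow> y = xs) \<and>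
           (\<exists>C c. C > 0 \<and> c > 0 \<and>
              (\<forall>t\<ge>0. norm ((x t, lam t, z t) - (xs, ls, zs)) \<le> C * exp (- c * t)))"
proof -
  obtain xs where opt: "optimalP f b xs" using optex by blast
  define \<nu> where "\<nu> = gf undefined (xs $ undefined)"
  have gxs: "gf k (xs $ k) = \<nu>" for k unfolding \<nu>_def by (rule kkt[OF grad opt])
  define ls :: "real^'p^'n" where "ls = (\<chi> i. - \<nu>)"
  define zs where "zs = xs - bb"
  define Lap :: "real^'p^'n \<Rightarrow> real^'p^'n" where "Lap = lap_apply (laplacian a)"
  define \<mu> where "\<mu> = Min (range mu_i)"
  define l where "l = Max (range l_i)"
  have mu_le: "\<mu> \<le> mu_i i" for i unfolding \<mu>_def by (rule Min_le) auto
  have l_ge: "l_i i \<le> l" for i unfolding l_def by (rule Max_ge) auto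
  have mupos: "\<mu> > 0" unfolding \<mu>_def using strong by (subst Min_gr_iff) auto
  have mul: "mu_i i \<le> l_i i" for i
    using mu_le_l[OF grad strong[THEN conjunct2]] smooth[of i] by blast
  have mu_l: "\<mu> \<le> l" using mu_le[of undefined] mul[of undefined] l_ge[of undefined] by linarith
  have lpos: "l \<ge> 0" using mupos mu_l by linarith
  have al2: "\<alpha> \<ge> 1/2" using alpha by simp
  have alpos: "\<alpha> > 0" using al2 by linarith
  define D where "D = (\<phi> + 1) * \<mu>"
  have Dpos: "D > 0" unfolding D_def using phi mupos by simp
  have aD: "\<alpha> * D \<ge> (\<phi>\<^sup>2 + 3*\<phi> + 3) + l\<^sup>2 + 3/2 - \<mu>"
  proof -
    have "\<alpha> \<ge> ((\<phi>\<^sup>2 + 3*\<phi> + 3) + l\<^sup>2 + 3/2 - \<mu>) / D" using alpha by (simp add: D_def \<mu>_def l_def)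
    then show ?thesis using Dpos by (simp add: divide_le_eq)
  qed
  have amu: "4 * \<alpha> * \<mu> > 1"
  proof (rule ccontr)
    assume "\<not> 4 * \<alpha> * \<mu> > 1"
    then have "\<alpha> * \<mu> \<le> 1/4" by simp
    then have f1: "\<alpha> * \<mu> * (\<phi> + 1) \<le> 1/4 * (\<phi> + 1)" using phi by (intro mult_right_mono) auto
    have e: "\<alpha> * D = \<alpha> * \<mu> * (\<phi> + 1)" unfolding D_def by (simp add: ac_simps)
    have f2: "\<alpha> * \<mu> * (\<phi> + 1) \<ge> (\<phi>\<^sup>2 + 3*\<phi> + 3) + l\<^sup>2 + 3/2 - \<mu>" using aD e by simp
    have f3: "l\<^sup>2 \<ge> \<mu>\<^sup>2" using mupos mu_l by (intro power_mono) auto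
    have "0 \<le> (\<mu> - 1/2)\<^sup>2" by simp
    moreover have "(\<mu> - 1/2)\<^sup>2 = \<mu>\<^sup>2 - \<mu> + 1/4" by (simp add: power2_eq_square algebra_simps)
    ultimately have f4: "\<mu>\<^sup>2 - \<mu> + 1/4 \<ge> 0" by simp
    have f5: "\<phi>\<^sup>2 \<ge> 0" by simp
    define P where "P = \<alpha> * \<mu> * (\<phi> + 1)"
    define Q where "Q = \<phi>\<^sup>2"
    define R where "R = \<mu>\<^sup>2"
    define S where "S = l\<^sup>2"
    have "P \<le> \<phi>/4 + 1/4" using f1 unfolding P_def by simp
    moreover have "Q + 3 * \<phi> + 3 + S + 3 / 2 - \<mu> \<le> P" using f2 unfolding P_def Q_def S_def .
    moreover have "R \<le> S" using f3 unfolding R_def S_def .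
    moreover have "0 \<le> R - \<mu> + 1/4" using f4 unfolding R_def .
    moreover have "0 \<le> Q" using f5 unfolding Q_def .
    ultimately show False using phi by linarith
  qed
  have half: "2 * \<alpha> > 1 / (2 * \<mu>)"
  proof -
    have "1 / (2 * \<mu>) < 2 * \<alpha> \<longleftrightarrow> 1 < 2 * \<alpha> * (2 * \<mu>)" using mupos by (simp add: divide_less_eq)
    then show ?thesis using amu by (simp add: algebra_simps)
  qed
  have Lap_prj: "Lap v = Lap (prj v)" for v
  proof -
    have "v - prj v = (\<chi> i. (1 / real CARD('n)) *\<^sub>R (\<Sum>j\<in>UNIV. v $ j))" by (simp add: prj_def)
    then have "Lap (v - prj v) = 0" by (simp add: Lap_def lap_const)
    then show ?thesis by (simp add: Lap_def lap_diff)
  qed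
  have Lap_sum: "(\<Sum>i\<in>UNIV. (c *\<^sub>R Lap v) $ i) = 0" for c v
  proof -
    have "(\<Sum>i\<in>UNIV. (c *\<^sub>R Lap v) $ i) = c *\<^sub>R (\<Sum>i\<in>UNIV. Lap v $ i)"
      by (simp add: scaleR_sum_right)
    then show ?thesis by (simp add: Lap_def lap_sum0[OF wb])
  qed
  obtain \<rho> K where rho: "\<rho> > 2*\<alpha> + 1/(2*\<mu>)" and K: "K \<ge> 0"
    and Y2g: "\<And>v. v \<bullet> (\<beta> *\<^sub>R Lap v) \<ge> \<rho> * (norm (prj v))\<^sup>2"
    and Y3g: "\<And>v. norm (\<beta> *\<^sub>R Lap v) \<le> K * norm (prj v)"
  proof (cases "CARD('n) \<ge> 2")
    case True
    define \<eta> where "\<eta> = eta2 (sym_part (laplacian a))"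
    have etapos: "\<eta> > 0" unfolding \<eta>_def by (rule eta2_props(1)[OF wb a_nonneg sc True])
    define B where "B = 2 * (\<phi> + 1)\<^sup>2 * \<alpha>\<^sup>2 + 1"
    have den: "2 * \<phi> * \<alpha> * \<eta> > 0" using phi alpos etapos by simp
    have bB: "\<beta> * (2 * \<phi> * \<alpha> * \<eta>) \<ge> B" using beta den by (simp add: B_def \<eta>_def divide_le_eq)
    have pa: "(\<phi> + 1)\<^sup>2 \<ge> 4 * \<phi>"
    proof -
      have "(\<phi> - 1)\<^sup>2 \<ge> 0" by simp
      then show ?thesis by (simp add: power2_eq_square algebra_simps)
    qed
    have "4 * \<phi> * \<alpha>\<^sup>2 \<le> (\<phi> + 1)\<^sup>2 * \<alpha>\<^sup>2" using pa by (intro mult_right_mono) auto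
    moreover have "B = 2 * ((\<phi> + 1)\<^sup>2 * \<alpha>\<^sup>2) + 1" by (simp add: B_def mult.assoc)
    moreover have e1: "\<beta> * (2 * \<phi> * \<alpha> * \<eta>) = (\<beta> * \<eta>) * (2 * \<phi> * \<alpha>)" by (simp add: ac_simps)
    moreover have e2: "(4 * \<alpha>) * (2 * \<phi> * \<alpha>) = 2 * (4 * \<phi> * \<alpha>\<^sup>2)" by (simp add: power2_eq_square ac_simps)
    ultimately have "(\<beta> * \<eta>) * (2 * \<phi> * \<alpha>) \<ge> (4 * \<alpha>) * (2 * \<phi> * \<alpha>)"
      using bB by linarith
    then have be: "\<beta> * \<eta> \<ge> 4 * \<alpha>" using phi alpos by (simp add: mult_le_cancel_right)
    have bpos: "\<beta> > 0"
    proof -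
      have "\<beta> * \<eta> > 0" using be alpos by linarith
      then show ?thesis using etapos by (simp add: zero_less_mult_iff)
    qed
    obtain K0 where K0: "K0 > 0" "\<And>v. norm (\<beta> *\<^sub>R Lap v) \<le> norm v * K0"
      using bounded_linear.pos_bounded[OF bounded_linear_compose[OF bounded_linear_scaleR_right lap_bl]]
      unfolding Lap_def o_def by blast
    show ?thesis
    proof (rule that[of "\<beta> * \<eta>" K0])
      show "\<beta> * \<eta> > 2*\<alpha> + 1/(2*\<mu>)" using be half by linarith
      show "K0 \<ge> 0" using K0 by simp
      fix v
      have "\<beta> * (\<eta> * (norm (prj v))\<^sup>2) \<le> \<beta> * (v \<bullet> Lap v)"
        using lap_quad_bound[OF wb a_nonneg sc True, of v] bpos unfolding Lap_def \<eta>_def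
        by (intro mult_left_mono) auto
      then show "v \<bullet> (\<beta> *\<^sub>R Lap v) \<ge> \<beta> * \<eta> * (norm (prj v))\<^sup>2" by (simp add: mult.assoc)
      have "norm (\<beta> *\<^sub>R Lap v) = norm (\<beta> *\<^sub>R Lap (prj v))" using Lap_prj[of v] by simp
      also have "\<dots> \<le> norm (prj v) * K0" by (rule K0(2))
      finally show "norm (\<beta> *\<^sub>R Lap v) \<le> K0 * norm (prj v)" by (simp add: mult.commute)
    qed
  next
    case False
    moreover have "0 < CARD('n)" by (simp add: card_gt_0_iff)
    ultimately have c1: "CARD('n) = 1" by linarith
    obtain x0 :: 'n where u: "(UNIV :: 'n set) = {x0}" using c1 card_1_singletonE by blast
    have prj0: "prj v = 0" for v :: "real^'p^'n"
    proof -
      have s: "(\<Sum>j\<in>UNIV. v $ j) = v $ x0" by (subst u) simp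
      have "prj v $ i = 0" for i
      proof -
        have "i \<in> {x0}" by (subst u[symmetric]) simp
        then have "i = x0" by simp
        then show ?thesis by (simp add: prj_nth s c1)
      qed
      then show ?thesis by (simp add: vec_eq_iff)
    qed
    have L0: "Lap v = 0" for v
    proof -
      have "Lap v = Lap 0" using Lap_prj[of v] prj0[of v] by simp
      also have "\<dots> = 0" unfolding Lap_def by (rule linear_0[OF lap_linear])
      finally show ?thesis .
    qed
    show ?thesis
      by (rule that[of "2*\<alpha> + 1/(2*\<mu>) + 1" 0]) (simp_all add: L0 prj0)
  qed
  have zsum: "(\<Sum>i\<in>UNIV. z t $ i) = 0" if t: "t \<ge> 0" for t
  proof -
    have d: "((\<lambda>t. \<Sum>i\<in>UNIV. z t $ i) has_derivative (\<lambda>h. 0)) (at s within {0..})" if "s \<in> {0..}" for s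
    proof -
      have "((\<lambda>t. \<Sum>i\<in>UNIV. z t $ i) has_vector_derivative
          (\<Sum>i\<in>UNIV. ((\<alpha> * \<beta>) *\<^sub>R lap_apply (laplacian a) (lam s)) $ i)) (at s within {0..})"
        using that by (intro has_vector_derivative_sum bounded_linear.has_vector_derivative[OF bounded_linear_vec_nth] dz) auto
      moreover have "(\<Sum>i\<in>UNIV. ((\<alpha> * \<beta>) *\<^sub>R lap_apply (laplacian a) (lam s)) $ i) = 0"
        using Lap_sum[of "\<alpha> * \<beta>" "lam s"] by (simp add: Lap_def)
      ultimately show ?thesis by (simp add: has_vector_derivative_def)
    qed
    obtain c where "\<forall>s\<in>{0::real..}. (\<Sum>i\<in>UNIV. z s $ i) = c"
      using has_derivative_zero_constant[OF convex_real_interval(1) d] by blast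
    then have "(\<Sum>i\<in>UNIV. z t $ i) = (\<Sum>i\<in>UNIV. z 0 $ i)" using t by simp
    then show ?thesis using z0 by simp
  qed
  define X where "X t = x t - xs" for t
  define Lm where "Lm t = lam t - ls" for t
  define Z where "Z t = z t - zs" for t
  define G where "G t = (\<chi> i. gf i (x t $ i) - gf i (xs $ i))" for t
  define Y where "Y t = \<beta> *\<^sub>R Lap (Lm t)" for t
  have Lap_ls: "Lap ls = 0" by (simp add: Lap_def ls_def lap_const)
  have LapLm: "Lap (Lm t) = Lap (lam t)" for t by (simp add: Lm_def Lap_def lap_diff Lap_ls[unfolded Lap_def])
  have dX: "(X has_vector_derivative (-(\<alpha> *\<^sub>R G t) - \<alpha> *\<^sub>R Lm t - (X t - Z t))) (at t within {0..})"
    if t: "t \<ge> 0" for t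
  proof -
    have "(\<chi> i. - \<alpha> *\<^sub>R (gf i (x t $ i) + lam t $ i) - (x t $ i - bb $ i - z t $ i))
        = -(\<alpha> *\<^sub>R G t) - \<alpha> *\<^sub>R Lm t - (X t - Z t)"
      by (simp add: vec_eq_iff G_def Lm_def X_def Z_def zs_def ls_def gxs algebra_simps)
    then show ?thesis using dx[OF t] unfolding X_def by (simp add: has_vector_derivative_diff_const)
  qed
  have dL: "(Lm has_vector_derivative ((X t - Z t) - Y t)) (at t within {0..})" if t: "t \<ge> 0" for t
  proof -
    have "x t - bb - z t - \<beta> *\<^sub>R lap_apply (laplacian a) (lam t) = (X t - Z t) - Y t"
      using LapLm[of t] by (simp add: X_def Z_def zs_def Y_def Lap_def algebra_simps)
    then show ?thesis using dlam[OF t] unfolding Lm_def by (simp add: has_vector_derivative_diff_const)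
  qed
  have dZ: "(Z has_vector_derivative (\<alpha> *\<^sub>R Y t)) (at t within {0..})" if t: "t \<ge> 0" for t
  proof -
    have "(\<alpha> * \<beta>) *\<^sub>R lap_apply (laplacian a) (lam t) = \<alpha> *\<^sub>R Y t"
      using LapLm[of t] by (simp add: Y_def Lap_def)
    then show ?thesis using dz[OF t] unfolding Z_def by (simp add: has_vector_derivative_diff_const)
  qed
  have G1: "X t \<bullet> G t \<ge> \<mu> * (norm (X t))\<^sup>2" for t
  proof -
    have "\<mu> * (norm (X t))\<^sup>2 = (\<Sum>i\<in>UNIV. \<mu> * (norm (x t $ i - xs $ i))\<^sup>2)"
      by (simp add: norm2_stack X_def sum_distrib_left)
    also have "\<dots> \<le> (\<Sum>i\<in>UNIV. (gf i (x t $ i) - gf i (xs $ i)) \<bullet> (x t $ i - xs $ i))"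
    proof (rule sum_mono)
      fix i
      have "\<mu> * (norm (x t $ i - xs $ i))\<^sup>2 \<le> mu_i i * (norm (x t $ i - xs $ i))\<^sup>2"
        using mu_le[of i] by (intro mult_right_mono) auto
      also have "\<dots> \<le> (gf i (x t $ i) - gf i (xs $ i)) \<bullet> (x t $ i - xs $ i)"
        by (rule mono_grad[OF grad strong[THEN conjunct2]])
      finally show "\<mu> * (norm (x t $ i - xs $ i))\<^sup>2 \<le> (gf i (x t $ i) - gf i (xs $ i)) \<bullet> (x t $ i - xs $ i)" .
    qed
    also have "\<dots> = X t \<bullet> G t" by (simp add: inner_stack X_def G_def inner_commute)
    finally show ?thesis .
  qed
  have G2: "norm (G t) \<le> l * norm (X t)" for t
  proof -
    have "(norm (G t))\<^sup>2 = (\<Sum>i\<in>UNIV. (norm (gf i (x t $ i) - gf i (xs $ i)))\<^sup>2)"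
      by (simp add: norm2_stack G_def)
    also have "\<dots> \<le> (\<Sum>i\<in>UNIV. (l * norm (x t $ i - xs $ i))\<^sup>2)"
    proof (rule sum_mono)
      fix i
      have "norm (gf i (x t $ i) - gf i (xs $ i)) \<le> l_i i * norm (x t $ i - xs $ i)"
        using smooth[of i] by blast
      also have "\<dots> \<le> l * norm (x t $ i - xs $ i)" using l_ge[of i] by (intro mult_right_mono) auto
      finally show "(norm (gf i (x t $ i) - gf i (xs $ i)))\<^sup>2 \<le> (l * norm (x t $ i - xs $ i))\<^sup>2"
        by (intro power_mono) auto
    qed
    also have "\<dots> = (l * norm (X t))\<^sup>2"
      by (simp add: norm2_stack X_def power_mult_distrib sum_distrib_left)
    finally have "(norm (G t))\<^sup>2 \<le> (l * norm (X t))\<^sup>2" .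
    then show ?thesis by (rule power2_le_imp_le) (use lpos in simp)
  qed
  have Y1: "prj (Y t) = Y t" for t by (rule prj_fix) (use Lap_sum[of \<beta> "Lm t"] in \<open>simp add: Y_def\<close>)
  have Y2: "Lm t \<bullet> Y t \<ge> \<rho> * (norm (prj (Lm t)))\<^sup>2" for t unfolding Y_def by (rule Y2g)
  have Y3: "norm (Y t) \<le> K * norm (prj (Lm t))" for t unfolding Y_def by (rule Y3g)
  have Z1: "prj (Z t) = Z t" if t: "t \<ge> 0" for t
  proof (rule prj_fix)
    have "(\<Sum>i\<in>UNIV. zs $ i) = 0" using opt bsum by (simp add: zs_def sum_subtractf optimalP_def feasibleP_def)
    then show "(\<Sum>i\<in>UNIV. Z t $ i) = 0" using zsum[OF t] by (simp add: Z_def sum_subtractf)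
  qed
  obtain C c where C: "C > 0" "c > 0"
    and dec: "\<forall>t\<ge>0. (norm (X t))\<^sup>2 + (norm (Lm t))\<^sup>2 + (norm (Z t))\<^sup>2 \<le> C * exp (- c * t)"
    using abstract_decay[OF prj_bl prj_sa prj_id alpos mupos K rho dX dL dZ G1 G2 Y1 Y2 Y3 Z1] by blast
  show ?thesis
  proof (intro exI conjI allI impI)
    show "optimalP f b xs" by (rule opt)
    show "\<And>y. optimalP f b y \<Longrightarrow> y = xs" by (rule opt_unique[OF grad strong opt])
    show "sqrt C > 0" using C by simp
    show "c / 2 > 0" using C by simp
    fix t :: real assume t: "t \<ge> 0"
    have "norm ((x t, lam t, z t) - (xs, ls, zs)) = sqrt ((norm (X t))\<^sup>2 + (norm (Lm t))\<^sup>2 + (norm (Z t))\<^sup>2)"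
      by (simp add: norm_Pair X_def Lm_def Z_def add.assoc)
    also have "\<dots> \<le> sqrt (C * exp (- c * t))" using dec t by simp
    also have "\<dots> = sqrt C * exp (- (c / 2) * t)" by (simp add: real_sqrt_mult sqrt_exp_half)
    finally show "norm ((x t, lam t, z t) - (xs, ls, zs)) \<le> sqrt C * exp (- (c / 2) * t)" .
  qed
qed

end
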